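(* Consider a market in which every hospital's utility is proportional to total wage, i.e. for each $h\in H$ there is $\gamma_h>0$ with $f_h(Y)=\gamma_h w_h(Y)$ for all $Y\subseteq X_h$. For each $h$, let $\mathrm{Ch}_h$ be the choice function that, given $X'\subseteq X_h$ (with $\mathrm{Ch}_h(\emptyset)=\emptyset$), sorts $X'$ in non-decreasing order of wage (ties broken by a fixed order) as $x^{(1)},\dots,x^{(|X'|)}$, starts with $Y=\emptyset$, for $i=1,\dots,|X'|-1$ adds $x^{(i)}$ to $Y$ if $w_h(Y\cup\{x^{(i)}\})<B_h$, then adds $x^{(|X'|)}$ and returns $Y$. Then the generalized deferred acceptance mechanism with these choice functions is strategy-proof for doctors and produces a $B'_H$-stable matching for some $B'_H$ with $B_h\le B'_h<B_h+\overline{w}_h$ for every $h\in H$.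
   Context: A market consists of a finite set of doctors $D$, a finite set of hospitals $H$, a finite set of contracts $X\subseteq D\times H\times\mathbb{R}_{>0}$ (contract $x=(d,h,w)$ has doctor $x_D=d$, hospital $x_H=h$, wage $x_W=w$), strict preferences $\succ_d$ of each doctor $d$ over $X_d\cup\{\emptyset\}$, utilities $f_h$ of each hospital on subsets of $X_h$, and budgets $B_h>0$ with $0<x_W\le B_h$ for all $x\in X_h$. For $Y\subseteq X$: $Y_d=\{x\in Y:x_D=d\}$, $Y_h=\{x\in Y:x_H=h\}$, $w_h(Y)=\sum_{x\in Y_h}x_W$; $\overline{w}_h=\max_{x\in X_h}x_W$. A matching is $Y\subseteq X$ with $|Y_d|\le1$ for all $d$. Given $B'_H=(B'_h)_h$, a matching $Y$ is $B'_H$-feasible if $w_h(Y)\le B'_h$ for all $h$; a matching $Z\subseteq X_h$ blocks $Y$ if every doctor $x_D$ with $x\in Z\setminus Y$ strictly prefers $x$ to her contract in $Y$ (or to $\emptyset$), $f_h(Z)>f_h(Y_h)$ and $w_h(Z)\le B'_h$; $Y$ is $B'_H$-stable if it is $B'_H$-feasible and not blocked by any $h$ and $Z\subseteq X_h$. Generalized deferred acceptance with hospital choice functions $\mathrm{Ch}_h$: let $\mathrm{Ch}_H(Y)=\bigcup_h\mathrm{Ch}_h(Y_h)$; $\mathrm{Ch}_d(Y)=\{x\}$ for the $\succ_d$-best $x\in Y_d$ if $x\succ_d\emptyset$, else $\emptyset$; $\mathrm{Ch}_D(Y)=\bigcup_d\mathrm{Ch}_d(Y_d)$. Set $R^{(0)}=\emptyset$;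 for $i=1,2,\dots$: $Y^{(i)}=\mathrm{Ch}_D(X\setminus R^{(i-1)})$, $Z^{(i)}=\mathrm{Ch}_H(Y^{(i)})$, $R^{(i)}=R^{(i-1)}\cup(Y^{(i)}\setminus Z^{(i)})$; if $Y^{(i)}=Z^{(i)}$, output $Y^{(i)}$. This is a mechanism mapping reported doctor preference profiles to matchings; it is strategy-proof for doctors if for every doctor $d$, every profile $\succ_D$ and every alternative report $\succ'_d$, the outcome of $d$ under $\succ_D$ is weakly $\succ_d$-preferred to her outcome under $(\succ'_d,\succ_{-d})$. *)

theory Defs
  imports Complex_Main
begin

type_synonym ('d, 'h) contract = "'d \<times> 'h \<times> real"

definition cD :: "('d, 'h) contract \<Rightarrow> 'd" where "cD x = fst x"
definition cH :: "('d, 'h) contract \<Rightarrow> 'h" where "cH x = fst (snd x)"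
definition cW :: "('d, 'h) contract \<Rightarrow> real" where "cW x = snd (snd x)"

definition doc_part :: "('d, 'h) contract set \<Rightarrow> 'd \<Rightarrow> ('d, 'h) contract set" where
  "doc_part Y d = {x \<in> Y. cD x = d}"
definition hosp_part :: "('d, 'h) contract set \<Rightarrow> 'h \<Rightarrow> ('d, 'h) contract set" where
  "hosp_part Y h = {x \<in> Y. cH x = h}"

text \<open>total wage of a set of contracts; w_h(Y) = wsum (hosp_part Y h)\<close>
definition wsum :: "('d, 'h) contract set \<Rightarrow> real" where
  "wsum Y = (\<Sum>x\<in>Y. cW x)"

definition wbar :: "('d, 'h) contract set \<Rightarrow> 'h \<Rightarrow> real" where
  "wbar X h = Max (cW ` hosp_part X h)"

text \<open>Strict preferences: (a, b) \<in> r means a is strictly preferred to b;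
  None stands for being unmatched (\<emptyset>).\<close>
definition pref_on :: "'a set \<Rightarrow> 'a rel \<Rightarrow> bool" where
  "pref_on A r \<longleftrightarrow> strict_linear_order_on A r \<and> r \<subseteq> A \<times> A"

definition acc_set :: "('d, 'h) contract set \<Rightarrow> 'd \<Rightarrow> ('d, 'h) contract option set" where
  "acc_set X d = insert None (Some ` doc_part X d)"

definition valid_profile :: "'d set \<Rightarrow> ('d, 'h) contract set \<Rightarrow>
    ('d \<Rightarrow> ('d, 'h) contract option rel) \<Rightarrow> bool" where
  "valid_profile D X P \<longleftrightarrow> (\<forall>d\<in>D. pref_on (acc_set X d) (P d))"

definition is_matching :: "('d, 'h) contract set \<Rightarrow> bool" where
  "is_matching Y \<longleftrightarrow> (\<forall>d. finite (doc_part Y d) \<and> card (doc_part Y d) \<le> 1)"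

definition outcome :: "('d, 'h) contract set \<Rightarrow> 'd \<Rightarrow> ('d, 'h) contract option" where
  "outcome Y d = (if doc_part Y d \<noteq> {} then Some (THE x. x \<in> doc_part Y d) else None)"

definition weakly_pref :: "'a rel \<Rightarrow> 'a \<Rightarrow> 'a \<Rightarrow> bool" where
  "weakly_pref r a b \<longleftrightarrow> a = b \<or> (a, b) \<in> r"

definition feasible :: "'h set \<Rightarrow> ('h \<Rightarrow> real) \<Rightarrow> ('d, 'h) contract set \<Rightarrow> bool" where
  "feasible H B' Y \<longleftrightarrow> (\<forall>h\<in>H. wsum (hosp_part Y h) \<le> B' h)"

definition blocks :: "('d, 'h) contract set \<Rightarrow> ('d \<Rightarrow> ('d, 'h) contract option rel) \<Rightarrow>
    ('h \<Rightarrow> ('d, 'h) contract set \<Rightarrow> real) \<Rightarrow> ('h \<Rightarrow> real) \<Rightarrow>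
    'h \<Rightarrow> ('d, 'h) contract set \<Rightarrow> ('d, 'h) contract set \<Rightarrow> bool" where
  "blocks X P f B' h Z Y \<longleftrightarrow>
     Z \<subseteq> hosp_part X h \<and> is_matching Z \<and>
     (\<forall>x\<in>Z - Y. (Some x, outcome Y (cD x)) \<in> P (cD x)) \<and>
     f h Z > f h (hosp_part Y h) \<and> wsum Z \<le> B' h"

definition stable :: "'h set \<Rightarrow> ('d, 'h) contract set \<Rightarrow> ('d \<Rightarrow> ('d, 'h) contract option rel) \<Rightarrow>
    ('h \<Rightarrow> ('d, 'h) contract set \<Rightarrow> real) \<Rightarrow> ('h \<Rightarrow> real) \<Rightarrow> ('d, 'h) contract set \<Rightarrow> bool" where
  "stable H X P f B' Y \<longleftrightarrow> Y \<subseteq> X \<and> is_matching Y \<and> feasible H B' Y \<and>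
     \<not> (\<exists>h\<in>H. \<exists>Z. blocks X P f B' h Z Y)"

definition chD :: "('d \<Rightarrow> ('d, 'h) contract option rel) \<Rightarrow> ('d, 'h) contract set \<Rightarrow> ('d, 'h) contract set" where
  "chD P Y = {x \<in> Y. (Some x, None) \<in> P (cD x) \<and>
      (\<forall>y\<in>Y. cD y = cD x \<and> y \<noteq> x \<longrightarrow> (Some x, Some y) \<in> P (cD x))}"

definition hlt :: "('h \<Rightarrow> ('d, 'h) contract rel) \<Rightarrow> 'h \<Rightarrow> ('d, 'h) contract \<Rightarrow> ('d, 'h) contract \<Rightarrow> bool" where
  "hlt tb h x y \<longleftrightarrow> cW x < cW y \<or> (cW x = cW y \<and> (x, y) \<in> tb h)"

definition sorted_list :: "('h \<Rightarrow> ('d, 'h) contract rel) \<Rightarrow> 'h \<Rightarrow> ('d, 'h) contract set \<Rightarrow> ('d, 'h) contract list" where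
  "sorted_list tb h X' = (SOME xs. set xs = X' \<and> distinct xs \<and> sorted_wrt (hlt tb h) xs)"

fun greedy :: "real \<Rightarrow> ('d, 'h) contract set \<Rightarrow> ('d, 'h) contract list \<Rightarrow> ('d, 'h) contract set" where
  "greedy b Y [] = Y"
| "greedy b Y [x] = insert x Y"
| "greedy b Y (x # y # xs) = greedy b (if wsum (insert x Y) < b then insert x Y else Y) (y # xs)"

definition chh :: "('h \<Rightarrow> real) \<Rightarrow> ('h \<Rightarrow> ('d, 'h) contract rel) \<Rightarrow> 'h \<Rightarrow> ('d, 'h) contract set \<Rightarrow> ('d, 'h) contract set" where
  "chh B tb h X' = greedy (B h) {} (sorted_list tb h X')"

definition chH :: "'h set \<Rightarrow> ('h \<Rightarrow> real) \<Rightarrow> ('h \<Rightarrow> ('d, 'h) contract rel) \<Rightarrow> ('d, 'h) contract set \<Rightarrow> ('d, 'h) contract set" where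
  "chH H B tb Y = (\<Union>h\<in>H. chh B tb h (hosp_part Y h))"

text \<open>rej i = R^(i); the i-th round (1-based) proposes Y^(i) = chD P (X - rej (i-1)).\<close>
fun rej :: "'h set \<Rightarrow> ('d, 'h) contract set \<Rightarrow> ('h \<Rightarrow> real) \<Rightarrow> ('h \<Rightarrow> ('d, 'h) contract rel) \<Rightarrow>
    ('d \<Rightarrow> ('d, 'h) contract option rel) \<Rightarrow> nat \<Rightarrow> ('d, 'h) contract set" where
  "rej H X B tb P 0 = {}"
| "rej H X B tb P (Suc i) =
     rej H X B tb P i \<union> (chD P (X - rej H X B tb P i) - chH H B tb (chD P (X - rej H X B tb P i)))"

definition gda :: "'h set \<Rightarrow> ('d, 'h) contract set \<Rightarrow> ('h \<Rightarrow> real) \<Rightarrow> ('h \<Rightarrow> ('d, 'h) contract rel) \<Rightarrow>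
    ('d \<Rightarrow> ('d, 'h) contract option rel) \<Rightarrow> ('d, 'h) contract set" where
  "gda H X B tb P =
    (let k = (LEAST k. chD P (X - rej H X B tb P k) = chH H B tb (chD P (X - rej H X B tb P k)))
     in chD P (X - rej H X B tb P k))"

definition strategy_proof :: "'d set \<Rightarrow> ('d, 'h) contract set \<Rightarrow>
    (('d \<Rightarrow> ('d, 'h) contract option rel) \<Rightarrow> ('d, 'h) contract set) \<Rightarrow> bool" where
  "strategy_proof D X M \<longleftrightarrow>
    (\<forall>P d P'. valid_profile D X P \<and> d \<in> D \<and> pref_on (acc_set X d) P' \<longrightarrow>
       weakly_pref (P d) (outcome (M P) d) (outcome (M (P(d := P'))) d))"

end

theory Submission
  imports Defs
begin

lemma wsum_insert: "finite Y \<Longrightarrow> x \<notin> Y \<Longrightarrow> wsum (insert x Y) = cW x + wsum Y"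
  by (simp add: wsum_def)

lemma wsum_mono: "A \<subseteq> B \<Longrightarrow> finite B \<Longrightarrow> (\<forall>z\<in>B. 0 < cW z) \<Longrightarrow> wsum A \<le> wsum B"
  unfolding wsum_def by (rule sum_mono2) auto

lemma greedy_inv:
  fixes lt :: "('d,'h) contract \<Rightarrow> ('d,'h) contract \<Rightarrow> bool"
  assumes xs: "ps @ qs = xs" and dist: "distinct xs" and srt: "sorted_wrt lt xs" and ne: "qs \<noteq> []"
    and tr: "\<And>a b c. lt a b \<Longrightarrow> lt b c \<Longrightarrow> lt a c"
    and as: "\<And>a b. lt a b \<Longrightarrow> \<not> lt b a"
    and wle: "\<And>a b. lt a b \<Longrightarrow> cW a \<le> cW b"
    and pos: "\<forall>z\<in>set xs. 0 < cW z" and bpos: "0 < b"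
    and ia: "Y = {z \<in> set ps. wsum {y \<in> set xs. lt y z \<or> y = z} < b}"
    and ib: "Y \<noteq> set ps \<longrightarrow> (\<exists>u\<in>set ps - Y. b \<le> wsum Y + cW u)"
    and ic: "Y = {} \<or> wsum Y < b"
  shows "greedy b Y qs = {z \<in> set (butlast xs). wsum {y \<in> set xs. lt y z \<or> y = z} < b} \<union> {last xs}
     \<and> (greedy b Y qs \<noteq> set xs \<longrightarrow> b \<le> wsum (greedy b Y qs))
     \<and> wsum (greedy b Y qs) < b + cW (last xs)"
  using xs ne ia ib ic
proof (induction qs arbitrary: ps Y)
  case Nil
  then show ?case by simp
next
  case (Cons x qs')
  define L where "L z = {y \<in> set xs. lt y z \<or> y = z}" for z
  have finL: "finite (L z)" for z unfolding L_def by simp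
  have srt2: "sorted_wrt lt (ps @ x # qs')" using srt Cons.prems(1) by simp
  have dist2: "distinct (ps @ x # qs')" using dist Cons.prems(1) by simp
  have psx: "\<And>p. p \<in> set ps \<Longrightarrow> lt p x" using srt2 by (auto simp: sorted_wrt_append)
  have xq: "\<And>q. q \<in> set qs' \<Longrightarrow> lt x q" using srt2 by (auto simp: sorted_wrt_append)
  have xnps: "x \<notin> set ps" using dist2 by auto
  have Ysub: "Y \<subseteq> set ps" using Cons.prems(3) by auto
  have finY: "finite Y" using Ysub finite_subset by blast
  have xnY: "x \<notin> Y" using Ysub xnps by blast
  have Lx: "L x = insert x (set ps)"
  proof -
    have "set xs = set ps \<union> {x} \<union> set qs'" using Cons.prems(1) by auto
    moreover have "\<And>q. q \<in> set qs' \<Longrightarrow> \<not> lt q x \<and> q \<noteq> x" using xq as dist2 by auto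
    ultimately show ?thesis unfolding L_def using psx by auto
  qed
  have Lsub: "\<And>z. z \<in> set ps \<Longrightarrow> L z \<subseteq> L x"
    unfolding L_def using psx tr by blast
  have posxs: "\<forall>z\<in>set xs. 0 < cW z" using pos .
  have Lmono: "\<And>z. z \<in> set ps \<Longrightarrow> wsum (L z) \<le> wsum (L x)"
    by (rule wsum_mono[OF Lsub finL]) (use posxs in \<open>auto simp: L_def\<close>)
  have ia': "Y = {z \<in> set ps. wsum (L z) < b}" using Cons.prems(3) unfolding L_def by simp
  show ?case
  proof (cases qs')
    case Nil
    have lastx: "last xs = x" using Cons.prems(1) Nil by auto
    have bl: "set (butlast xs) = set ps" using Cons.prems(1) Nil by auto
    have g: "greedy b Y (x # qs') = insert x Y" using Nil by simp
    have r1: "greedy b Y (x # qs') = {z \<in> set (butlast xs). wsum (L z) < b} \<union> {last xs}"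
      using g lastx bl ia' by auto
    have r2: "greedy b Y (x # qs') \<noteq> set xs \<longrightarrow> b \<le> wsum (greedy b Y (x # qs'))"
    proof
      assume "greedy b Y (x # qs') \<noteq> set xs"
      then have "Y \<noteq> set ps" using g Cons.prems(1) Nil by auto
      then obtain u where u: "u \<in> set ps - Y" "b \<le> wsum Y + cW u" using Cons.prems(4) by blast
      have "cW u \<le> cW x" using wle psx u(1) by blast
      then show "b \<le> wsum (greedy b Y (x # qs'))" using g wsum_insert[OF finY xnY] u by simp
    qed
    have r3: "wsum (greedy b Y (x # qs')) < b + cW (last xs)"
      using g wsum_insert[OF finY xnY] lastx Cons.prems(5) bpos by (auto simp: wsum_def)
    show ?thesis using r1 r2 r3 unfolding L_def by simp
  next
    case (Cons y rest)
    define Y' where "Y' = (if wsum (insert x Y) < b then insert x Y else Y)"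
    have g: "greedy b Y (x # qs') = greedy b Y' qs'" using Cons by (simp add: Y'_def)
    have e: "(ps @ [x]) @ qs' = xs" using Cons.prems(1) by simp
    have inv: "Y' = {z \<in> set (ps @ [x]). wsum (L z) < b}
       \<and> (Y' \<noteq> set (ps @ [x]) \<longrightarrow> (\<exists>u\<in>set (ps @ [x]) - Y'. b \<le> wsum Y' + cW u))
       \<and> (Y' = {} \<or> wsum Y' < b)"
    proof (cases "Y = set ps")
      case True
      have ws: "wsum (insert x Y) = wsum (L x)" using True Lx by simp
      show ?thesis
      proof (cases "wsum (insert x Y) < b")
        case True2: True
        have "\<forall>z\<in>set ps. wsum (L z) < b" using Lmono ws True2 by fastforce
        then show ?thesis using True True2 ws by (auto simp: Y'_def)
      next
        case False2: False
        have "\<forall>z\<in>set ps. wsum (L z) < b" using ia' True by blast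
        have w1: "b \<le> wsum Y + cW x" using False2 wsum_insert[OF finY xnY] by simp
        have Y'eq: "Y' = Y" using False2 by (simp add: Y'_def)
        have p1: "Y' = {z \<in> set (ps @ [x]). wsum (L z) < b}"
          using Y'eq True \<open>\<forall>z\<in>set ps. wsum (L z) < b\<close> False2 ws by auto
        have p2: "\<exists>u\<in>set (ps @ [x]) - Y'. b \<le> wsum Y' + cW u"
          using w1 Y'eq xnY by auto
        show ?thesis using p1 p2 Y'eq Cons.prems(5) by blast
      qed
    next
      case False
      then obtain u where u: "u \<in> set ps - Y" "b \<le> wsum Y + cW u" using Cons.prems(4) by blast
      have "cW u \<le> cW x" using wle psx u(1) by blast
      then have nb: "\<not> wsum (insert x Y) < b" using wsum_insert[OF finY xnY] u by simp
      have "\<not> wsum (L u) < b" using u(1) ia' by blast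
      then have "\<not> wsum (L x) < b" using Lmono[of u] u(1) by simp
      then show ?thesis using nb False u ia' Cons.prems(5) by (auto simp: Y'_def)
    qed
    have ne': "qs' \<noteq> []" using Cons by simp
    have IH: "greedy b Y' qs' = {z \<in> set (butlast xs). wsum {y \<in> set xs. lt y z \<or> y = z} < b} \<union> {last xs}
     \<and> (greedy b Y' qs' \<noteq> set xs \<longrightarrow> b \<le> wsum (greedy b Y' qs'))
     \<and> wsum (greedy b Y' qs') < b + cW (last xs)"
      apply (rule Cons.IH[OF e ne'])
      using inv unfolding L_def by auto
    show ?thesis unfolding g using IH by blast
  qed
qed

lemma maximal_exists:
  assumes "finite K" "K \<noteq> {}" "\<And>a b c. lt a b \<Longrightarrow> lt b c \<Longrightarrow> lt a c" "\<And>a. \<not> lt a a"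
  shows "\<exists>m\<in>K. \<forall>z\<in>K. \<not> lt m z"
  using assms(1,2)
proof (induction K rule: finite_induct)
  case empty then show ?case by simp
next
  case (insert a F)
  show ?case
  proof (cases "F = {}")
    case True then show ?thesis using assms(4) by auto
  next
    case False
    then obtain m where m: "m \<in> F" "\<forall>z\<in>F. \<not> lt m z" using insert.IH by blast
    show ?thesis
    proof (cases "lt m a")
      case True
      have "\<forall>z\<in>insert a F. \<not> lt a z"
      proof
        fix z assume z: "z \<in> insert a F"
        show "\<not> lt a z"
        proof
          assume az: "lt a z"
          show False
          proof (cases "z = a")
            case True then show False using az assms(4) by simp
          next
            case False
            then have "z \<in> F" using z by simp
            moreover have "lt m z" using assms(3)[OF \<open>lt m a\<close> az] .
            ultimately show False using m by blast
          qed
        qed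
      qed
      then show ?thesis by blast
    next
      case False
      then show ?thesis using m by auto
    qed
  qed
qed

locale mkt =
  fixes H :: "'h set" and X :: "('d, 'h) contract set" and B :: "'h \<Rightarrow> real"
    and tb :: "'h \<Rightarrow> ('d, 'h) contract rel"
  assumes finX: "finite X" and XH: "\<forall>x\<in>X. cH x \<in> H" and wpos: "\<forall>x\<in>X. 0 < cW x"
    and Bpos: "\<forall>h\<in>H. 0 < B h" and tbo: "\<forall>h\<in>H. strict_linear_order_on (hosp_part X h) (tb h)"
    and hne: "\<forall>h\<in>H. hosp_part X h \<noteq> {}" and finH: "finite H"
begin

abbreviation "hp h \<equiv> hosp_part X h"

lemma hp_sub: "hp h \<subseteq> X" by (auto simp: hosp_part_def)
lemma fin_hp: "finite (hp h)" using finX hp_sub finite_subset by blast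

lemma hlt_trans: "h \<in> H \<Longrightarrow> hlt tb h a b \<Longrightarrow> hlt tb h b c \<Longrightarrow> hlt tb h a c"
proof -
  assume h: "h \<in> H" and ab: "hlt tb h a b" and bc: "hlt tb h b c"
  have t: "trans (tb h)" using tbo h by (simp add: strict_linear_order_on_def)
  show ?thesis
  proof (cases "cW a < cW b")
    case True
    then show ?thesis using bc unfolding hlt_def by auto
  next
    case False
    then have "cW a = cW b" "(a, b) \<in> tb h" using ab unfolding hlt_def by auto
    moreover have "cW b < cW c \<or> (cW b = cW c \<and> (b, c) \<in> tb h)" using bc unfolding hlt_def by auto
    ultimately show ?thesis unfolding hlt_def using transD[OF t] by metis
  qed
qed

lemma hlt_irrefl: "h \<in> H \<Longrightarrow> \<not> hlt tb h a a"
proof -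
  assume h: "h \<in> H"
  have "irrefl (tb h)" using tbo h by (simp add: strict_linear_order_on_def)
  then have "(a, a) \<notin> tb h" by (metis irrefl_def)
  then show ?thesis by (simp add: hlt_def)
qed

lemma hlt_asym: "h \<in> H \<Longrightarrow> hlt tb h a b \<Longrightarrow> \<not> hlt tb h b a"
  using hlt_trans hlt_irrefl by blast

lemma hlt_total: "h \<in> H \<Longrightarrow> a \<in> hp h \<Longrightarrow> b \<in> hp h \<Longrightarrow> a \<noteq> b \<Longrightarrow> hlt tb h a b \<or> hlt tb h b a"
proof -
  assume h: "h \<in> H" and a: "a \<in> hp h" and b: "b \<in> hp h" and ab: "a \<noteq> b"
  have t: "total_on (hp h) (tb h)" using tbo h by (simp add: strict_linear_order_on_def)
  then have "(a, b) \<in> tb h \<or> (b, a) \<in> tb h" using a b ab by (meson total_on_def)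
  then show ?thesis unfolding hlt_def by linarith
qed

lemma hlt_w: "hlt tb h a b \<Longrightarrow> cW a \<le> cW b"
  unfolding hlt_def by auto

definition ismax :: "'h \<Rightarrow> ('d, 'h) contract set \<Rightarrow> ('d, 'h) contract \<Rightarrow> bool" where
  "ismax h S z \<longleftrightarrow> (\<forall>y\<in>S. y \<noteq> z \<longrightarrow> hlt tb h y z)"

definition LL :: "'h \<Rightarrow> ('d, 'h) contract set \<Rightarrow> ('d, 'h) contract \<Rightarrow> ('d, 'h) contract set" where
  "LL h S z = {y \<in> S. hlt tb h y z \<or> y = z}"

lemma max_exists: "h \<in> H \<Longrightarrow> S \<subseteq> hp h \<Longrightarrow> S \<noteq> {} \<Longrightarrow> \<exists>m\<in>S. ismax h S m"
proof -
  assume a: "h \<in> H" "S \<subseteq> hp h" "S \<noteq> {}"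
  have fS: "finite S" using a(2) fin_hp finite_subset by blast
  have tr: "\<And>x y z. hlt tb h x y \<Longrightarrow> hlt tb h y z \<Longrightarrow> hlt tb h x z" using hlt_trans[OF a(1)] .
  have ir: "\<And>x. \<not> hlt tb h x x" using hlt_irrefl[OF a(1)] .
  have "\<exists>m\<in>S. \<forall>z\<in>S. \<not> hlt tb h m z"
    apply (rule maximal_exists[where K=S and lt="hlt tb h"])
       apply (fact fS)
      apply (fact a(3))
     apply (erule (1) tr)
    apply (rule ir)
    done
  then obtain m where m: "m \<in> S" "\<forall>z\<in>S. \<not> hlt tb h m z" by blast
  have "ismax h S m" unfolding ismax_def
  proof (intro ballI impI)
    fix y assume y: "y \<in> S" "y \<noteq> m"
    have "hlt tb h y m \<or> hlt tb h m y" using hlt_total[OF a(1)] y m(1) a(2) by (meson subsetD)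
    then show "hlt tb h y m" using m(2) y(1) by blast
  qed
  then show ?thesis using m by blast
qed

lemma max_unique: "h \<in> H \<Longrightarrow> ismax h S a \<Longrightarrow> ismax h S b \<Longrightarrow> a \<in> S \<Longrightarrow> b \<in> S \<Longrightarrow> a = b"
proof (rule ccontr)
  assume h: "h \<in> H" and ma: "ismax h S a" and mb: "ismax h S b" and a: "a \<in> S" and b: "b \<in> S" and ne: "a \<noteq> b"
  have "hlt tb h b a" using ma b ne unfolding ismax_def by (metis (no_types))
  moreover have "hlt tb h a b" using mb a ne unfolding ismax_def by (metis (no_types))
  ultimately show False using hlt_asym[OF h] by blast
qed

lemma sorted_exists: "h \<in> H \<Longrightarrow> S \<subseteq> hp h \<Longrightarrow> \<exists>xs. set xs = S \<and> distinct xs \<and> sorted_wrt (hlt tb h) xs"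
proof -
  assume h: "h \<in> H" and S: "S \<subseteq> hp h"
  have "finite S" using S fin_hp finite_subset by blast
  then show ?thesis
  proof (induction rule: finite_remove_induct)
    case empty then show ?case by simp
  next
    case (remove A)
    obtain m where m: "m \<in> A" "ismax h A m" using max_exists[OF h _ remove(2)] remove(3) S by blast
    obtain xs where xs: "set xs = A - {m}" "distinct xs" "sorted_wrt (hlt tb h) xs"
      using remove(4)[OF m(1)] by blast
    have "set (xs @ [m]) = A" using xs m by auto
    moreover have "distinct (xs @ [m])" using xs by auto
    moreover have "sorted_wrt (hlt tb h) (xs @ [m])"
      using xs m unfolding ismax_def by (auto simp: sorted_wrt_append)
    ultimately show ?case by blast
  qed
qed

lemma sl_props: "h \<in> H \<Longrightarrow> S \<subseteq> hp h \<Longrightarrow>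
   set (sorted_list tb h S) = S \<and> distinct (sorted_list tb h S) \<and> sorted_wrt (hlt tb h) (sorted_list tb h S)"
  unfolding sorted_list_def using someI_ex[OF sorted_exists] by blast

lemma last_max: "sorted_wrt lt xs \<Longrightarrow> distinct xs \<Longrightarrow> xs \<noteq> [] \<Longrightarrow> z \<in> set xs \<Longrightarrow> z \<noteq> last xs \<Longrightarrow> lt z (last xs)"
proof -
  assume a: "sorted_wrt lt xs" "distinct xs" "xs \<noteq> []" "z \<in> set xs" "z \<noteq> last xs"
  have e: "xs = butlast xs @ [last xs]" using a(3) by simp
  have "set xs = set (butlast xs) \<union> {last xs}" by (subst e) simp
  then have zb: "z \<in> set (butlast xs)" using a(4,5) by blast
  have "sorted_wrt lt (butlast xs @ [last xs])" using a(1) e by simp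
  then show ?thesis using zb by (simp add: sorted_wrt_append)
qed

lemma wbar_ge: "h \<in> H \<Longrightarrow> z \<in> hp h \<Longrightarrow> cW z \<le> wbar X h"
  unfolding wbar_def using fin_hp by auto

lemma wbar_pos: "h \<in> H \<Longrightarrow> 0 < wbar X h"
proof -
  assume h: "h \<in> H"
  obtain z where "z \<in> hp h" using hne h by blast
  moreover then have "0 < cW z" using wpos hp_sub by blast
  ultimately show ?thesis using wbar_ge[OF h] by fastforce
qed

lemma chh_facts:
  assumes h: "h \<in> H" and S: "S \<subseteq> hp h"
  shows "chh B tb h S = {z \<in> S. ismax h S z \<or> wsum (LL h S z) < B h}
    \<and> (chh B tb h S \<noteq> S \<longrightarrow> B h \<le> wsum (chh B tb h S))
    \<and> wsum (chh B tb h S) < B h + wbar X h"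
proof (cases "S = {}")
  case True
  have "sorted_list tb h S = []" using sl_props[OF h S] True by simp
  then show ?thesis using True Bpos wbar_pos[OF h] h by (simp add: chh_def wsum_def add_pos_pos)
next
  case False
  define xs where "xs = sorted_list tb h S"
  have p: "set xs = S" "distinct xs" "sorted_wrt (hlt tb h) xs" using sl_props[OF h S] xs_def by auto
  have ne: "xs \<noteq> []" using p(1) False by auto
  have posS: "\<forall>z\<in>set xs. 0 < cW z" using p(1) S hp_sub wpos by blast
  have G: "greedy (B h) {} xs = {z \<in> set (butlast xs). wsum {y \<in> set xs. hlt tb h y z \<or> y = z} < B h} \<union> {last xs}
     \<and> (greedy (B h) {} xs \<noteq> set xs \<longrightarrow> B h \<le> wsum (greedy (B h) {} xs))
     \<and> wsum (greedy (B h) {} xs) < B h + cW (last xs)"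
    apply (rule greedy_inv[where ps="[]" and qs=xs and lt="hlt tb h" and b="B h" and Y="{}"])
    subgoal by simp
    subgoal by (fact p(2))
    subgoal by (fact p(3))
    subgoal by (fact ne)
    subgoal by (erule (1) hlt_trans[OF h])
    subgoal by (erule hlt_asym[OF h])
    subgoal by (erule hlt_w)
    subgoal by (fact posS)
    subgoal using Bpos h by blast
    subgoal by simp
    subgoal by simp
    subgoal by simp
    done
  have lastS: "last xs \<in> S" using ne p(1) by auto
  have lmax: "ismax h S (last xs)" unfolding ismax_def using last_max[OF p(3) p(2) ne] p(1) by blast
  have e: "xs = butlast xs @ [last xs]" using ne by simp
  have bl: "set (butlast xs) = S - {last xs}"
  proof -
    have "distinct (butlast xs @ [last xs])" using p(2) e by simp
    then have "last xs \<notin> set (butlast xs)" by simp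
    moreover have "set xs = set (butlast xs) \<union> {last xs}" using e by (metis set_append empty_set list.simps(15))
    ultimately show ?thesis using p(1) by auto
  qed
  have c1: "chh B tb h S = {z \<in> S. ismax h S z \<or> wsum (LL h S z) < B h}"
  proof -
    have "chh B tb h S = greedy (B h) {} xs" by (simp add: chh_def xs_def)
    also have "\<dots> = {z \<in> S. ismax h S z \<or> wsum (LL h S z) < B h}"
    proof -
      have im: "\<And>z. z \<in> S \<Longrightarrow> ismax h S z \<longleftrightarrow> z = last xs"
        using max_unique[OF h _ lmax _ lastS] lmax by blast
      have ll: "\<And>z. {y \<in> set xs. hlt tb h y z \<or> y = z} = LL h S z" unfolding LL_def using p(1) by simp
      have "greedy (B h) {} xs = {z \<in> S - {last xs}. wsum (LL h S z) < B h} \<union> {last xs}"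
        using G bl ll by simp
      also have "\<dots> = {z \<in> S. ismax h S z \<or> wsum (LL h S z) < B h}"
        using im lastS by blast
      finally show ?thesis .
    qed
    finally show ?thesis .
  qed
  have "cW (last xs) \<le> wbar X h" using wbar_ge[OF h] lastS S by blast
  then show ?thesis using c1 G p(1) by (auto simp: chh_def xs_def)
qed

lemma chh_char: "h \<in> H \<Longrightarrow> S \<subseteq> hp h \<Longrightarrow> chh B tb h S = {z \<in> S. ismax h S z \<or> wsum (LL h S z) < B h}"
  by (rule conjunct1[OF chh_facts])

lemma finLL: "S \<subseteq> hp h \<Longrightarrow> finite (LL h S z)"
proof -
  assume "S \<subseteq> hp h"
  then have "finite S" using fin_hp by (rule finite_subset)
  moreover have "LL h S z \<subseteq> S" unfolding LL_def by blast
  ultimately show ?thesis by (rule finite_subset[rotated])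
qed

lemma posLL: "S \<subseteq> hp h \<Longrightarrow> \<forall>y\<in>LL h S z. 0 < cW y"
proof
  fix y assume S: "S \<subseteq> hp h" and y: "y \<in> LL h S z"
  have "y \<in> X" using y S hp_sub unfolding LL_def by blast
  then show "0 < cW y" using wpos by blast
qed

lemma chh_sub: "h \<in> H \<Longrightarrow> T \<subseteq> hp h \<Longrightarrow> S \<subseteq> T \<Longrightarrow> z \<in> S \<Longrightarrow> z \<in> chh B tb h T \<Longrightarrow> z \<in> chh B tb h S"
proof -
  assume a: "h \<in> H" "T \<subseteq> hp h" "S \<subseteq> T" "z \<in> S" "z \<in> chh B tb h T"
  have S: "S \<subseteq> hp h" using a(2,3) by (rule subset_trans[rotated])
  have "z \<in> {z \<in> T. ismax h T z \<or> wsum (LL h T z) < B h}" using a(5) chh_char[OF a(1,2)] by simp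
  then have z: "ismax h T z \<or> wsum (LL h T z) < B h" by simp
  have sub: "LL h S z \<subseteq> LL h T z" using a(3) unfolding LL_def by blast
  have le: "wsum (LL h S z) \<le> wsum (LL h T z)"
    by (rule wsum_mono[OF sub finLL[OF a(2)] posLL[OF a(2)]])
  have mx: "ismax h T z \<Longrightarrow> ismax h S z" using a(3) unfolding ismax_def by blast
  have "ismax h S z \<or> wsum (LL h S z) < B h" using z le mx by linarith
  then have "z \<in> {z \<in> S. ismax h S z \<or> wsum (LL h S z) < B h}" using a(4) by simp
  then show ?thesis using chh_char[OF a(1) S] by simp
qed

lemma chh_subset: "h \<in> H \<Longrightarrow> S \<subseteq> hp h \<Longrightarrow> chh B tb h S \<subseteq> S"
  by (subst chh_char) auto

lemma lad1:
  assumes h: "h \<in> H" and S: "S \<subseteq> hp h" and y: "y \<in> hp h" "y \<notin> S"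
  shows "card (chh B tb h S) \<le> card (chh B tb h (insert y S))"
proof -
  define T where "T = insert y S"
  have T: "T \<subseteq> hp h" using S y(1) unfolding T_def by simp
  define CS where "CS = chh B tb h S"
  define CT where "CT = chh B tb h T"
  have CSc: "CS = {z \<in> S. ismax h S z \<or> wsum (LL h S z) < B h}" using chh_char[OF h S] CS_def by simp
  have CTc: "CT = {z \<in> T. ismax h T z \<or> wsum (LL h T z) < B h}" using chh_char[OF h T] CT_def by simp
  have finS: "finite S" using S fin_hp by (rule finite_subset)
  have finT: "finite T" using T fin_hp by (rule finite_subset)
  have finCT: "finite CT" using CTc finT by simp
  have finCS: "finite CS" using CSc finS by simp
  have finL: "\<And>z. finite (LL h S z)" using finLL[OF S] .
  have posL: "\<And>z. \<forall>u\<in>LL h S z. 0 < cW u" using posLL[OF S] .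
  have subT: "CT \<subseteq> CS \<union> {y}"
  proof
    fix z assume z: "z \<in> CT"
    show "z \<in> CS \<union> {y}"
    proof (cases "z = y")
      case True then show ?thesis by simp
    next
      case False
      then have zS: "z \<in> S" using z CTc T_def by auto
      have ST: "S \<subseteq> T" unfolding T_def by auto
      have "z \<in> chh B tb h T" using z CT_def by simp
      then have "z \<in> CS" using chh_sub[OF h T ST zS] CS_def by simp
      then show ?thesis by simp
    qed
  qed
  have LLS: "\<And>l. l \<in> S \<Longrightarrow> \<not> hlt tb h y l \<Longrightarrow> LL h T l = LL h S l"
    unfolding LL_def T_def by auto
  have key: "CS - CT = {} \<or> (\<exists>l. CS - CT = {l} \<and> y \<in> CT)"
  proof (cases "S = {}")
    case True then show ?thesis using CSc by simp
  next
    case False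
    obtain m where m: "m \<in> S" "ismax h S m" using max_exists[OF h S False] by blast
    have ym: "y \<noteq> m" using m(1) y(2) by blast
    have mh: "m \<in> hp h" using m(1) S by blast
    have tot: "hlt tb h y m \<or> hlt tb h m y" using hlt_total[OF h y(1) mh ym] .
    show ?thesis
    proof (cases "hlt tb h m y")
      case True
      have ymax: "ismax h T y" unfolding ismax_def
      proof (intro ballI impI)
        fix z assume z: "z \<in> T" "z \<noteq> y"
        then have zS: "z \<in> S" unfolding T_def by simp
        show "hlt tb h z y"
        proof (cases "z = m")
          case True then show ?thesis using \<open>hlt tb h m y\<close> by simp
        next
          case False
          then have "hlt tb h z m" using m(2) zS unfolding ismax_def by blast
          then show ?thesis using hlt_trans[OF h _ \<open>hlt tb h m y\<close>] by simp
        qed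
      qed
      then have yCT: "y \<in> CT" using CTc T_def by simp
      have "CS - CT \<subseteq> {m}"
      proof
        fix l assume l: "l \<in> CS - CT"
        show "l \<in> {m}"
        proof (rule ccontr)
          assume lm: "l \<notin> {m}"
          have lS: "l \<in> S" using l CSc by simp
          have "\<not> ismax h S l" using max_unique[OF h _ m(2) lS m(1)] lm by auto
          then have ws: "wsum (LL h S l) < B h" using l CSc by simp
          have "hlt tb h l m" using m(2) lS lm unfolding ismax_def by auto
          then have "\<not> hlt tb h y l"
            using \<open>hlt tb h m y\<close> hlt_trans[OF h] hlt_asym[OF h] by metis
          then have "LL h T l = LL h S l" using LLS lS by simp
          then have "l \<in> CT" using ws CTc T_def lS by simp
          then show False using l by simp
        qed
      qed
      then have "CS - CT = {} \<or> CS - CT = {m}" by (rule subset_singletonD)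
      then show ?thesis using yCT by blast
    next
      case False
      then have ylm: "hlt tb h y m" using tot by simp
      have mmax: "ismax h T m" unfolding ismax_def
      proof (intro ballI impI)
        fix z assume z: "z \<in> T" "z \<noteq> m"
        show "hlt tb h z m"
        proof (cases "z = y")
          case True then show ?thesis using ylm by simp
        next
          case False
          then have "z \<in> S" using z(1) unfolding T_def by simp
          then show ?thesis using m(2) z(2) unfolding ismax_def by simp
        qed
      qed
      have mCT: "m \<in> CT" using mmax CTc T_def m(1) by simp
      have lost: "\<And>l. l \<in> CS - CT \<Longrightarrow> l \<in> S \<and> hlt tb h y l \<and> wsum (LL h S l) < B h
                   \<and> B h \<le> cW y + wsum (LL h S l)"
      proof -
        fix l assume l: "l \<in> CS - CT"
        have lS: "l \<in> S" using l CSc by simp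
        have lT: "l \<in> T" using lS T_def by simp
        have lm: "l \<noteq> m" using l mCT by auto
        have "\<not> ismax h S l" using max_unique[OF h _ m(2) lS m(1)] lm by auto
        then have ws: "wsum (LL h S l) < B h" using l CSc by simp
        have nT: "\<not> wsum (LL h T l) < B h" using l CTc lT by simp
        have yl: "hlt tb h y l"
        proof (rule ccontr)
          assume "\<not> hlt tb h y l"
          then have "LL h T l = LL h S l" using LLS lS by simp
          then show False using ws nT by simp
        qed
        have e1: "LL h T l = insert y (LL h S l)" using yl unfolding LL_def T_def by auto
        have e2: "y \<notin> LL h S l" using y(2) unfolding LL_def by simp
        have "wsum (LL h T l) = cW y + wsum (LL h S l)"
          unfolding e1 by (rule wsum_insert[OF finL e2])
        then show "l \<in> S \<and> hlt tb h y l \<and> wsum (LL h S l) < B h \<and> B h \<le> cW y + wsum (LL h S l)"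
          using lS yl ws nT by simp
      qed
      have two: "\<And>l1 l2. l1 \<in> CS - CT \<Longrightarrow> l2 \<in> CS - CT \<Longrightarrow> hlt tb h l1 l2 \<Longrightarrow> False"
      proof -
        fix l1 l2 assume a: "l1 \<in> CS - CT" "l2 \<in> CS - CT" "hlt tb h l1 l2"
        have l2S: "l2 \<in> S" using lost[OF a(2)] by simp
        have L1: "insert l2 (LL h S l1) \<subseteq> LL h S l2"
        proof
          fix u assume u: "u \<in> insert l2 (LL h S l1)"
          show "u \<in> LL h S l2"
          proof (cases "u = l2")
            case True then show ?thesis using l2S unfolding LL_def by simp
          next
            case False
            then have "u \<in> S" "hlt tb h u l1 \<or> u = l1" using u unfolding LL_def by auto
            then show ?thesis using a(3) hlt_trans[OF h, of u l1 l2] unfolding LL_def by auto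
          qed
        qed
        have n: "l2 \<notin> LL h S l1"
          using a(3) hlt_asym[OF h, of l1 l2] hlt_irrefl[OF h, of l1] unfolding LL_def by auto
        have "wsum (insert l2 (LL h S l1)) \<le> wsum (LL h S l2)"
          by (rule wsum_mono[OF L1 finL posL])
        then have "cW l2 + wsum (LL h S l1) \<le> wsum (LL h S l2)"
          using wsum_insert[OF finL n] by simp
        moreover have "cW y \<le> cW l2" using hlt_w[of h y l2] lost[OF a(2)] by simp
        moreover have "B h \<le> cW y + wsum (LL h S l1)" using lost[OF a(1)] by simp
        moreover have "wsum (LL h S l2) < B h" using lost[OF a(2)] by simp
        ultimately show False by linarith
      qed
      show ?thesis
      proof (cases "CS - CT = {}")
        case True then show ?thesis by simp
      next
        case False
        then obtain l where l: "l \<in> CS - CT" by blast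
        have single: "CS - CT = {l}"
        proof
          show "CS - CT \<subseteq> {l}"
          proof
            fix l2 assume l2: "l2 \<in> CS - CT"
            show "l2 \<in> {l}"
            proof (rule ccontr)
              assume "l2 \<notin> {l}"
              then have ne: "l \<noteq> l2" by simp
              have "l \<in> hp h" "l2 \<in> hp h" using lost[OF l] lost[OF l2] S by auto
              then have "hlt tb h l l2 \<or> hlt tb h l2 l" using hlt_total[OF h _ _ ne] by simp
              then show False using two[OF l l2] two[OF l2 l] by blast
            qed
          qed
        qed (use l in simp)
        have lp: "l \<in> S" "hlt tb h y l" "wsum (LL h S l) < B h" using lost[OF l] by auto
        have sub1: "LL h S y \<subseteq> LL h S l - {l}"
        proof
          fix u assume u: "u \<in> LL h S y"
          then have uS: "u \<in> S" and uy: "hlt tb h u y \<or> u = y" unfolding LL_def by auto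
          have ul: "hlt tb h u l" using uy lp(2) hlt_trans[OF h, of u y l] by auto
          then have "u \<noteq> l" using hlt_irrefl[OF h, of l] by auto
          then show "u \<in> LL h S l - {l}" using uS ul unfolding LL_def by simp
        qed
        have finD: "finite (LL h S l - {l})" using finL by simp
        have posD: "\<forall>u\<in>LL h S l - {l}. 0 < cW u" using posL[of l] by blast
        have w1: "wsum (LL h S y) \<le> wsum (LL h S l - {l})"
          by (rule wsum_mono[OF sub1 finD posD])
        have lL: "l \<in> LL h S l" using lp(1) unfolding LL_def by simp
        have w2: "wsum (LL h S l) = cW l + wsum (LL h S l - {l})"
        proof -
          have "LL h S l = insert l (LL h S l - {l})" using lL by auto
          then have "wsum (LL h S l) = wsum (insert l (LL h S l - {l}))" by simp
          also have "\<dots> = cW l + wsum (LL h S l - {l})" by (rule wsum_insert[OF finD]) simp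
          finally show ?thesis .
        qed
        have w3: "cW y \<le> cW l" using hlt_w[OF lp(2)] .
        have e1: "LL h T y = insert y (LL h S y)" unfolding LL_def T_def by auto
        have e2: "y \<notin> LL h S y" using y(2) unfolding LL_def by simp
        have w4: "wsum (LL h T y) = cW y + wsum (LL h S y)"
          unfolding e1 by (rule wsum_insert[OF finL e2])
        have "wsum (LL h T y) < B h" using w1 w2 w3 w4 lp(3) by linarith
        then have "y \<in> CT" using CTc T_def by simp
        then show ?thesis using single by blast
      qed
    qed
  qed
  show ?thesis
  proof (cases "CS - CT = {}")
    case True
    then have "CS \<subseteq> CT" by blast
    then have "card CS \<le> card CT" using card_mono[OF finCT] by simp
    then show ?thesis using CS_def CT_def T_def by simp
  next
    case False
    then obtain l where l: "CS - CT = {l}" "y \<in> CT" using key by blast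
    have lCS: "l \<in> CS" using l(1) by blast
    have "CS - {l} \<subseteq> CT - {y}"
    proof
      fix u assume u: "u \<in> CS - {l}"
      then have "u \<in> CT" using l(1) by blast
      moreover have "u \<noteq> y" using u CSc y(2) by auto
      ultimately show "u \<in> CT - {y}" by simp
    qed
    then have "card (CS - {l}) \<le> card (CT - {y})" using card_mono finCT by blast
    moreover have "card CS = Suc (card (CS - {l}))" using card_Suc_Diff1[OF finCS lCS] by simp
    moreover have "card CT = Suc (card (CT - {y}))" using card_Suc_Diff1[OF finCT l(2)] by simp
    ultimately show ?thesis using CS_def CT_def T_def by simp
  qed
qed

lemma chh_lad: "h \<in> H \<Longrightarrow> T \<subseteq> hp h \<Longrightarrow> S \<subseteq> T \<Longrightarrow> card (chh B tb h S) \<le> card (chh B tb h T)"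
proof -
  assume a: "h \<in> H" "T \<subseteq> hp h" "S \<subseteq> T"
  have finT: "finite T" using a(2) fin_hp by (rule finite_subset)
  have fin: "finite (T - S)" using finT by simp
  have main: "\<And>F. finite F \<Longrightarrow> F \<subseteq> T - S \<Longrightarrow> card (chh B tb h S) \<le> card (chh B tb h (S \<union> F))"
  proof -
    fix F :: "('d, 'h) contract set"
    assume "finite F" "F \<subseteq> T - S"
    then show "card (chh B tb h S) \<le> card (chh B tb h (S \<union> F))"
    proof (induction F rule: finite_induct)
      case empty then show ?case by simp
    next
      case (insert y F)
      have y: "y \<in> hp h" "y \<notin> S \<union> F" using insert a by auto
      have SF: "S \<union> F \<subseteq> hp h" using insert a by auto
      have "card (chh B tb h (S \<union> F)) \<le> card (chh B tb h (insert y (S \<union> F)))"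
        by (rule lad1[OF a(1) SF y])
      moreover have "card (chh B tb h S) \<le> card (chh B tb h (S \<union> F))" using insert by simp
      ultimately show ?case by simp
    qed
  qed
  have "card (chh B tb h S) \<le> card (chh B tb h (S \<union> (T - S)))" using main[OF fin] by simp
  moreover have "S \<union> (T - S) = T" using a(3) by blast
  ultimately show ?thesis by simp
qed

abbreviation "C \<equiv> chH H B tb"

lemma hpS: "S \<subseteq> X \<Longrightarrow> hosp_part S h \<subseteq> hp h"
  unfolding hosp_part_def by blast

lemma C_mem: "x \<in> C S \<longleftrightarrow> (\<exists>h\<in>H. x \<in> chh B tb h (hosp_part S h))"
  unfolding chH_def by simp

lemma C_sub: "S \<subseteq> X \<Longrightarrow> C S \<subseteq> S"
proof
  fix x assume S: "S \<subseteq> X" and x: "x \<in> C S"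
  then obtain h where h: "h \<in> H" "x \<in> chh B tb h (hosp_part S h)" using C_mem by blast
  then have "x \<in> hosp_part S h" using chh_subset[OF h(1) hpS[OF S]] by blast
  then show "x \<in> S" unfolding hosp_part_def by simp
qed

lemma C_substitutes: "T \<subseteq> X \<Longrightarrow> S \<subseteq> T \<Longrightarrow> z \<in> S \<Longrightarrow> z \<in> C T \<Longrightarrow> z \<in> C S"
proof -
  assume T: "T \<subseteq> X" and ST: "S \<subseteq> T" and zS: "z \<in> S" and zT: "z \<in> C T"
  obtain h where h: "h \<in> H" "z \<in> chh B tb h (hosp_part T h)" using zT C_mem by blast
  have "z \<in> hosp_part T h" using chh_subset[OF h(1) hpS[OF T]] h(2) by blast
  then have zh: "z \<in> hosp_part S h" using zS unfolding hosp_part_def by simp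
  have sub: "hosp_part S h \<subseteq> hosp_part T h" using ST unfolding hosp_part_def by blast
  have "z \<in> chh B tb h (hosp_part S h)" by (rule chh_sub[OF h(1) hpS[OF T] sub zh h(2)])
  then show ?thesis using h(1) C_mem by blast
qed

lemma C_hosp: "h \<in> H \<Longrightarrow> S \<subseteq> X \<Longrightarrow> hosp_part (C S) h = chh B tb h (hosp_part S h)"
proof
  assume h: "h \<in> H" and S: "S \<subseteq> X"
  show "hosp_part (C S) h \<subseteq> chh B tb h (hosp_part S h)"
  proof
    fix x assume x: "x \<in> hosp_part (C S) h"
    then have xC: "x \<in> C S" and xh: "cH x = h" unfolding hosp_part_def by auto
    obtain h' where h': "h' \<in> H" "x \<in> chh B tb h' (hosp_part S h')" using xC C_mem by blast
    have "x \<in> hosp_part S h'" using chh_subset[OF h'(1) hpS[OF S]] h'(2) by blast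
    then have "h' = h" using xh unfolding hosp_part_def by simp
    then show "x \<in> chh B tb h (hosp_part S h)" using h' by simp
  qed
next
  assume h: "h \<in> H" and S: "S \<subseteq> X"
  show "chh B tb h (hosp_part S h) \<subseteq> hosp_part (C S) h"
  proof
    fix x assume x: "x \<in> chh B tb h (hosp_part S h)"
    then have "x \<in> hosp_part S h" using chh_subset[OF h hpS[OF S]] by blast
    then have "cH x = h" unfolding hosp_part_def by simp
    moreover have "x \<in> C S" using x h C_mem by blast
    ultimately show "x \<in> hosp_part (C S) h" unfolding hosp_part_def by simp
  qed
qed

lemma C_fin: "S \<subseteq> X \<Longrightarrow> finite (C S)"
proof -
  assume S: "S \<subseteq> X"
  have "finite S" using S finX by (rule finite_subset)
  then show ?thesis using C_sub[OF S] by (rule finite_subset[rotated])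
qed

lemma C_card: "S \<subseteq> X \<Longrightarrow> card (C S) = (\<Sum>h\<in>H. card (chh B tb h (hosp_part S h)))"
proof -
  assume S: "S \<subseteq> X"
  have fin: "\<forall>h\<in>H. finite (chh B tb h (hosp_part S h))"
  proof
    fix h assume h: "h \<in> H"
    have "finite (hosp_part S h)" using hpS[OF S] fin_hp by (rule finite_subset)
    then show "finite (chh B tb h (hosp_part S h))" using chh_subset[OF h hpS[OF S]] by (rule finite_subset[rotated])
  qed
  have disj: "\<forall>h\<in>H. \<forall>h'\<in>H. h \<noteq> h' \<longrightarrow> chh B tb h (hosp_part S h) \<inter> chh B tb h' (hosp_part S h') = {}"
  proof (intro ballI impI)
    fix h h' assume h: "h \<in> H" and h': "h' \<in> H" and ne: "h \<noteq> h'"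
    have "chh B tb h (hosp_part S h) \<subseteq> hosp_part S h" using chh_subset[OF h hpS[OF S]] .
    moreover have "chh B tb h' (hosp_part S h') \<subseteq> hosp_part S h'" using chh_subset[OF h' hpS[OF S]] .
    moreover have "hosp_part S h \<inter> hosp_part S h' = {}" using ne unfolding hosp_part_def by auto
    ultimately show "chh B tb h (hosp_part S h) \<inter> chh B tb h' (hosp_part S h') = {}" by blast
  qed
  show ?thesis unfolding chH_def by (rule card_UN_disjoint[OF finH fin disj])
qed

lemma C_lad: "T \<subseteq> X \<Longrightarrow> S \<subseteq> T \<Longrightarrow> card (C S) \<le> card (C T)"
proof -
  assume T: "T \<subseteq> X" and ST: "S \<subseteq> T"
  have S: "S \<subseteq> X" using ST T by (rule subset_trans)
  have "(\<Sum>h\<in>H. card (chh B tb h (hosp_part S h))) \<le> (\<Sum>h\<in>H. card (chh B tb h (hosp_part T h)))"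
  proof (rule sum_mono)
    fix h assume h: "h \<in> H"
    have "hosp_part S h \<subseteq> hosp_part T h" using ST unfolding hosp_part_def by blast
    then show "card (chh B tb h (hosp_part S h)) \<le> card (chh B tb h (hosp_part T h))"
      by (rule chh_lad[OF h hpS[OF T]])
  qed
  then show ?thesis using C_card[OF S] C_card[OF T] by simp
qed

definition TT :: "('d \<Rightarrow> ('d, 'h) contract option rel) \<Rightarrow> ('d, 'h) contract set \<Rightarrow> ('d, 'h) contract set" where
  "TT P A = chD P (X - A) \<union> A"

abbreviation "RJ P k \<equiv> rej H X B tb P k"
abbreviation "YY P k \<equiv> chD P (X - RJ P k)"

lemma chD_sub: "chD P A \<subseteq> A" unfolding chD_def by auto

lemma chD_mono: "A2 \<subseteq> A1 \<Longrightarrow> y \<in> chD P A1 \<Longrightarrow> y \<in> A2 \<Longrightarrow> y \<in> chD P A2"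
  unfolding chD_def by auto

lemma rej_X: "RJ P k \<subseteq> X"
proof (induction k)
  case 0 then show ?case by simp
next
  case (Suc k)
  have "YY P k \<subseteq> X" using chD_sub[of P "X - RJ P k"] by blast
  then show ?case using Suc by auto
qed

lemma YY_X: "YY P k \<subseteq> X" using chD_sub[of P "X - RJ P k"] by blast
lemma YY_disj: "YY P k \<inter> RJ P k = {}" using chD_sub[of P "X - RJ P k"] by blast

lemma rej_mono: "j \<le> k \<Longrightarrow> RJ P j \<subseteq> RJ P k"
  by (rule lift_Suc_mono_le[of "\<lambda>k. RJ P k"]) auto

lemma terminates: "\<exists>k. YY P k = C (YY P k)"
proof (rule ccontr)
  assume "\<not> (\<exists>k. YY P k = C (YY P k))"
  then have ne: "\<And>k. YY P k \<noteq> C (YY P k)" by blast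
  have grow: "card (RJ P k) < card (RJ P (Suc k))" for k
  proof -
    have "C (YY P k) \<subseteq> YY P k" by (rule C_sub[OF YY_X])
    then obtain z where z: "z \<in> YY P k" "z \<notin> C (YY P k)" using ne[of k] by blast
    have "z \<notin> RJ P k" using z(1) YY_disj by blast
    moreover have "z \<in> RJ P (Suc k)" using z by simp
    moreover have "RJ P k \<subseteq> RJ P (Suc k)" by simp
    ultimately have "RJ P k \<subset> RJ P (Suc k)" by blast
    moreover have "finite (RJ P (Suc k))" using rej_X finX by (rule finite_subset)
    ultimately show ?thesis by (rule psubset_card_mono[rotated])
  qed
  have lb: "k \<le> card (RJ P k)" for k
  proof (induction k)
    case 0 then show ?case by simp
  next
    case (Suc k) then show ?case using grow[of k] by simp
  qed
  have "card (RJ P (Suc (card X))) \<le> card X" using card_mono[OF finX rej_X] .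
  then show False using lb[of "Suc (card X)"] by simp
qed

definition kf :: "('d \<Rightarrow> ('d, 'h) contract option rel) \<Rightarrow> nat" where
  "kf P = (LEAST k. YY P k = C (YY P k))"

abbreviation "Rf P \<equiv> RJ P (kf P)"
abbreviation "GD P \<equiv> gda H X B tb P"

lemma gda_eq: "GD P = chD P (X - Rf P)"
  unfolding gda_def kf_def Let_def by simp

lemma gda_fix: "C (GD P) = GD P"
proof -
  have "YY P (kf P) = C (YY P (kf P))" unfolding kf_def by (rule LeastI_ex[OF terminates])
  then show ?thesis using gda_eq by simp
qed

lemma Rf_X: "Rf P \<subseteq> X" by (rule rej_X)
lemma gda_X: "GD P \<subseteq> X" using gda_eq YY_X by simp
lemma gda_disj: "GD P \<inter> Rf P = {}" using gda_eq YY_disj by simp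

lemma TT_X: "Rp \<subseteq> X \<Longrightarrow> TT P Rp \<subseteq> X"
  unfolding TT_def using chD_sub[of P "X - Rp"] by blast

lemma prefix: assumes Rp: "Rp \<subseteq> X" and pf: "TT P Rp - C (TT P Rp) \<subseteq> Rp" shows "RJ P k \<subseteq> Rp"
proof (induction k)
  case 0 then show ?case by simp
next
  case (Suc k)
  have "YY P k - C (YY P k) \<subseteq> Rp"
  proof
    fix y assume y: "y \<in> YY P k - C (YY P k)"
    have YT: "YY P k \<subseteq> TT P Rp"
    proof
      fix z assume z: "z \<in> YY P k"
      show "z \<in> TT P Rp"
      proof (cases "z \<in> Rp")
        case True then show ?thesis unfolding TT_def by simp
      next
        case False
        have zX: "z \<in> X" using z YY_X by blast
        have sub: "X - Rp \<subseteq> X - RJ P k" using Suc by blast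
        have "z \<in> chD P (X - Rp)" using chD_mono[OF sub z] zX False by simp
        then show ?thesis unfolding TT_def by simp
      qed
    qed
    show "y \<in> Rp"
    proof (rule ccontr)
      assume yn: "y \<notin> Rp"
      have yT: "y \<in> TT P Rp" using YT y by blast
      have "y \<notin> C (TT P Rp)"
      proof
        assume "y \<in> C (TT P Rp)"
        then have "y \<in> C (YY P k)" using C_substitutes[OF TT_X[OF Rp] YT] y by blast
        then show False using y by blast
      qed
      then show False using pf yT yn by blast
    qed
  qed
  then show ?case using Suc by simp
qed

lemma cumul_step: "YY P k \<union> RJ P k \<subseteq> YY P (Suc k) \<union> RJ P (Suc k)"
proof
  fix z assume z: "z \<in> YY P k \<union> RJ P k"
  show "z \<in> YY P (Suc k) \<union> RJ P (Suc k)"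
  proof (cases "z \<in> RJ P k")
    case True then show ?thesis by simp
  next
    case False
    then have zY: "z \<in> YY P k" using z by blast
    show ?thesis
    proof (cases "z \<in> C (YY P k)")
      case False then show ?thesis using zY by simp
    next
      case True
      have "z \<notin> RJ P (Suc k)" using True \<open>z \<notin> RJ P k\<close> by simp
      moreover have "z \<in> X" using zY YY_X by blast
      moreover have "X - RJ P (Suc k) \<subseteq> X - RJ P k" by auto
      ultimately have "z \<in> YY P (Suc k)" using chD_mono[OF _ zY] by blast
      then show ?thesis by simp
    qed
  qed
qed

lemma cumul: "j \<le> k \<Longrightarrow> YY P j \<subseteq> YY P k \<union> RJ P k"
proof (induction k)
  case 0 then show ?case by simp
next
  case (Suc k)
  show ?case
  proof (cases "j = Suc k")
    case True then show ?thesis by simp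
  next
    case False
    then have "j \<le> k" using Suc.prems by simp
    then have "YY P j \<subseteq> YY P k \<union> RJ P k" by (rule Suc.IH)
    then show ?thesis using cumul_step[of P k] by blast
  qed
qed

lemma rej_origin: "z \<in> RJ P k \<Longrightarrow> \<exists>j<k. z \<in> YY P j \<and> z \<notin> C (YY P j)"
proof (induction k)
  case 0 then show ?case by simp
next
  case (Suc k)
  show ?case
  proof (cases "z \<in> RJ P k")
    case True then show ?thesis using Suc.IH less_Suc_eq by blast
  next
    case False then show ?thesis using Suc.prems by auto
  qed
qed

lemma CT_sub: "C (YY P k \<union> RJ P k) \<subseteq> YY P k"
proof
  fix z assume z: "z \<in> C (YY P k \<union> RJ P k)"
  have TX: "YY P k \<union> RJ P k \<subseteq> X" using YY_X rej_X by blast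
  have zT: "z \<in> YY P k \<union> RJ P k" using C_sub[OF TX] z by blast
  show "z \<in> YY P k"
  proof (rule ccontr)
    assume "z \<notin> YY P k"
    then have "z \<in> RJ P k" using zT by blast
    then obtain j where j: "j < k" "z \<in> YY P j" "z \<notin> C (YY P j)" using rej_origin by blast
    have "YY P j \<subseteq> YY P k \<union> RJ P k" using cumul j(1) by simp
    then have "z \<in> C (YY P j)" using C_substitutes[OF TX _ j(2) z] by blast
    then show False using j(3) by blast
  qed
qed

lemma final: "C (GD P \<union> Rf P) = GD P"
proof -
  let ?Y = "GD P" and ?T = "GD P \<union> Rf P"
  have TX: "?T \<subseteq> X" using gda_X Rf_X by blast
  have c1: "C ?T \<subseteq> ?Y" using CT_sub[of P "kf P"] gda_eq by simp
  have c2: "C ?T \<subseteq> C ?Y"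
  proof
    fix z assume z: "z \<in> C ?T"
    then have "z \<in> ?Y" using c1 by blast
    then show "z \<in> C ?Y" using C_substitutes[OF TX _ _ z] by blast
  qed
  have c3: "card (C ?Y) \<le> card (C ?T)" using C_lad[OF TX] by blast
  have "C ?T = C ?Y" using card_subset_eq[OF C_fin[OF gda_X] c2] c2 c3 card_mono[OF C_fin[OF gda_X] c2] by simp
  then show ?thesis using gda_fix by simp
qed

lemma TT_mono: "Ra \<subseteq> Rb \<Longrightarrow> TT P Ra \<subseteq> TT P Rb"
proof
  fix z assume ab: "Ra \<subseteq> Rb" and z: "z \<in> TT P Ra"
  show "z \<in> TT P Rb"
  proof (cases "z \<in> Rb")
    case True then show ?thesis unfolding TT_def by simp
  next
    case False
    then have "z \<notin> Ra" using ab by blast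
    then have zc: "z \<in> chD P (X - Ra)" using z unfolding TT_def by simp
    have "z \<in> X" using zc chD_sub by blast
    then have "z \<in> chD P (X - Rb)" using chD_mono[OF _ zc] False ab by blast
    then show ?thesis unfolding TT_def by simp
  qed
qed

lemma TT_final: "TT P (Rf P) = GD P \<union> Rf P" unfolding TT_def using gda_eq by simp

lemma compare: "chD P (X - Rf Q) = GD Q \<Longrightarrow> Rf P \<subseteq> Rf Q"
proof -
  assume e: "chD P (X - Rf Q) = GD Q"
  have "TT P (Rf Q) = GD Q \<union> Rf Q" unfolding TT_def using e by simp
  then have "TT P (Rf Q) - C (TT P (Rf Q)) \<subseteq> Rf Q" using final[of Q] by auto
  then show ?thesis using prefix[OF Rf_X] by blast
qed

definition asy :: "'a rel \<Rightarrow> bool" where "asy r \<longleftrightarrow> (\<forall>a b. (a, b) \<in> r \<longrightarrow> (b, a) \<notin> r)"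

lemma pref_trans: "pref_on A r \<Longrightarrow> (a, b) \<in> r \<Longrightarrow> (b, c) \<in> r \<Longrightarrow> (a, c) \<in> r"
proof -
  assume "pref_on A r" "(a, b) \<in> r" "(b, c) \<in> r"
  moreover have "pref_on A r \<Longrightarrow> trans r" unfolding pref_on_def strict_linear_order_on_def by simp
  ultimately show ?thesis by (meson transD)
qed

lemma pref_irrefl: "pref_on A r \<Longrightarrow> (a, a) \<notin> r"
proof -
  assume "pref_on A r"
  then have "irrefl r" unfolding pref_on_def strict_linear_order_on_def by simp
  then show ?thesis by (simp add: irrefl_def)
qed

lemma pref_total: "pref_on A r \<Longrightarrow> a \<in> A \<Longrightarrow> b \<in> A \<Longrightarrow> a \<noteq> b \<Longrightarrow> (a, b) \<in> r \<or> (b, a) \<in> r"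
proof -
  assume "pref_on A r" "a \<in> A" "b \<in> A" "a \<noteq> b"
  moreover have "pref_on A r \<Longrightarrow> total_on A r" unfolding pref_on_def strict_linear_order_on_def by simp
  ultimately show ?thesis by (simp add: total_on_def)
qed

lemma pref_asy: "pref_on A r \<Longrightarrow> asy r"
  unfolding asy_def
proof (intro allI impI notI)
  fix a b assume pr: "pref_on A r" and ab: "(a, b) \<in> r" and ba: "(b, a) \<in> r"
  have "(a, a) \<in> r" by (rule pref_trans[OF pr ab ba])
  then show False using pref_irrefl[OF pr] by simp
qed

lemma acc_None: "None \<in> acc_set X d" unfolding acc_set_def by simp
lemma acc_Some: "z \<in> X \<Longrightarrow> cD z = d \<Longrightarrow> Some z \<in> acc_set X d"
  unfolding acc_set_def doc_part_def by simp

lemma chD_mem: "y \<in> chD P A \<longleftrightarrow> y \<in> A \<and> (Some y, None) \<in> P (cD y) \<and>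
   (\<forall>z\<in>A. cD z = cD y \<and> z \<noteq> y \<longrightarrow> (Some y, Some z) \<in> P (cD y))"
  unfolding chD_def by simp

lemma chD_other: "cD y \<noteq> d \<Longrightarrow> y \<in> chD (P(d := r)) A \<longleftrightarrow> y \<in> chD P A"
  unfolding chD_mem by simp

lemma chD_uniq: "asy (P d) \<Longrightarrow> y \<in> chD P A \<Longrightarrow> z \<in> chD P A \<Longrightarrow> cD y = d \<Longrightarrow> cD z = d \<Longrightarrow> y = z"
proof (rule ccontr)
  assume a: "asy (P d)" "y \<in> chD P A" "z \<in> chD P A" "cD y = d" "cD z = d" "y \<noteq> z"
  have zA: "z \<in> A" "y \<in> A" using a(3) a(2) unfolding chD_mem by simp_all
  have "(Some y, Some z) \<in> P d" using a(2) zA(1) a(4,5,6) unfolding chD_mem by simp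
  moreover have "(Some z, Some y) \<in> P d" using a(3) zA(2) a(4,5,6) unfolding chD_mem by simp
  ultimately show False using a(1) unfolding asy_def by blast
qed

lemma chD_exists:
  assumes pr: "pref_on (acc_set X d) (P d)" and A: "A \<subseteq> X" and y: "y \<in> A" "cD y = d" "(Some y, None) \<in> P d"
  shows "\<exists>m\<in>chD P A. cD m = d \<and> weakly_pref (P d) (Some m) (Some y)"
proof -
  define K where "K = {z \<in> A. cD z = d \<and> (Some z, None) \<in> P d}"
  have fA: "finite A" using A finX by (rule finite_subset)
  have "K \<subseteq> A" unfolding K_def by blast
  then have fK: "finite K" using fA by (rule finite_subset)
  have yK: "y \<in> K" unfolding K_def using y by simp
  then have neK: "K \<noteq> {}" by blast
  have "\<exists>m\<in>K. \<forall>z\<in>K. \<not> (\<lambda>a b. (Some b, Some a) \<in> P d) m z"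
    apply (rule maximal_exists[where K=K and lt="\<lambda>a b. (Some b, Some a) \<in> P d"])
       apply (fact fK)
      apply (fact neK)
     apply (rule pref_trans[OF pr], assumption, assumption)
    apply (rule pref_irrefl[OF pr])
    done
  then obtain m where m: "m \<in> K" "\<forall>z\<in>K. (Some z, Some m) \<notin> P d" by blast
  have mA: "m \<in> A" "cD m = d" "(Some m, None) \<in> P d" using m(1) unfolding K_def by auto
  have mX: "m \<in> X" using mA(1) A by blast
  have beats: "\<And>z. z \<in> A \<Longrightarrow> cD z = d \<Longrightarrow> z \<noteq> m \<Longrightarrow> (Some m, Some z) \<in> P d"
  proof -
    fix z assume z: "z \<in> A" "cD z = d" "z \<noteq> m"
    have zX: "z \<in> X" using z(1) A by blast
    show "(Some m, Some z) \<in> P d"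
    proof (cases "(Some z, None) \<in> P d")
      case True
      then have "z \<in> K" unfolding K_def using z by simp
      then have "(Some z, Some m) \<notin> P d" using m(2) by blast
      moreover have "(Some z, Some m) \<in> P d \<or> (Some m, Some z) \<in> P d"
        using pref_total[OF pr acc_Some[OF zX z(2)] acc_Some[OF mX mA(2)]] z(3) by simp
      ultimately show ?thesis by simp
    next
      case False
      have "(Some z, None) \<in> P d \<or> (None, Some z) \<in> P d"
        using pref_total[OF pr acc_Some[OF zX z(2)] acc_None] by simp
      then have "(None, Some z) \<in> P d" using False by simp
      then show ?thesis using pref_trans[OF pr mA(3)] by simp
    qed
  qed
  have "m \<in> chD P A" unfolding chD_mem
  proof (intro conjI ballI impI)
    show "m \<in> A" by (fact mA(1))
    show "(Some m, None) \<in> P (cD m)" using mA(2,3) by simp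
    fix z assume "z \<in> A" "cD z = cD m \<and> z \<noteq> m"
    then show "(Some m, Some z) \<in> P (cD m)" using beats mA(2) by simp
  qed
  moreover have "weakly_pref (P d) (Some m) (Some y)"
  proof (cases "y = m")
    case True then show ?thesis unfolding weakly_pref_def by simp
  next
    case False then show ?thesis unfolding weakly_pref_def using beats[OF y(1) y(2)] by simp
  qed
  ultimately show ?thesis using mA(2) by blast
qed

lemma outcome_some: "m \<in> Y \<Longrightarrow> cD m = d \<Longrightarrow> (\<forall>y\<in>Y. cD y = d \<longrightarrow> y = m) \<Longrightarrow> outcome Y d = Some m"
proof -
  assume a: "m \<in> Y" "cD m = d" "\<forall>y\<in>Y. cD y = d \<longrightarrow> y = m"
  have e: "doc_part Y d = {m}"
  proof
    show "doc_part Y d \<subseteq> {m}" unfolding doc_part_def using a(3) by blast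
    show "{m} \<subseteq> doc_part Y d" unfolding doc_part_def using a(1,2) by blast
  qed
  show ?thesis unfolding outcome_def e by simp
qed

lemma outcome_none: "(\<forall>y\<in>Y. cD y \<noteq> d) \<Longrightarrow> outcome Y d = None"
proof -
  assume a: "\<forall>y\<in>Y. cD y \<noteq> d"
  have "doc_part Y d = {}" unfolding doc_part_def using a by blast
  then show ?thesis unfolding outcome_def by simp
qed

lemma weakly_trans: "pref_on A r \<Longrightarrow> weakly_pref r a b \<Longrightarrow> weakly_pref r b c \<Longrightarrow> weakly_pref r a c"
  unfolding weakly_pref_def
proof -
  assume pr: "pref_on A r" and ab: "a = b \<or> (a, b) \<in> r" and bc: "b = c \<or> (b, c) \<in> r"
  show "a = c \<or> (a, c) \<in> r"
  proof (cases "a = b")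
    case True then show ?thesis using bc by simp
  next
    case False
    then have ab': "(a, b) \<in> r" using ab by simp
    show ?thesis
    proof (cases "b = c")
      case True then show ?thesis using ab' by simp
    next
      case False
      then have "(b, c) \<in> r" using bc by simp
      then show ?thesis using pref_trans[OF pr ab'] by simp
    qed
  qed
qed

definition Pxr :: "('d, 'h) contract \<Rightarrow> ('d, 'h) contract option rel" where
  "Pxr x = {p. fst p = Some x \<and> snd p \<noteq> Some x}"

definition Qr :: "('d \<Rightarrow> ('d, 'h) contract option rel) \<Rightarrow> 'd \<Rightarrow> ('d, 'h) contract \<Rightarrow> ('d, 'h) contract option rel" where
  "Qr P d x = {p \<in> P d. weakly_pref (P d) (fst p) (Some x)}"

lemma chD_Px: assumes yd: "cD y = d" shows "y \<in> chD (P(d := Pxr x)) A \<longleftrightarrow> y = x \<and> x \<in> A"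
proof
  assume "y \<in> chD (P(d := Pxr x)) A"
  then have "y \<in> A" "(Some y, None) \<in> Pxr x" unfolding chD_mem using yd by simp_all
  then show "y = x \<and> x \<in> A" unfolding Pxr_def by simp
next
  assume a: "y = x \<and> x \<in> A"
  have "(Some y, None) \<in> Pxr x" using a unfolding Pxr_def by simp
  moreover have "\<forall>z\<in>A. cD z = cD y \<and> z \<noteq> y \<longrightarrow> (Some y, Some z) \<in> Pxr x"
    using a unfolding Pxr_def by simp
  ultimately show "y \<in> chD (P(d := Pxr x)) A" unfolding chD_mem using a yd by simp
qed

lemma chD_Q: assumes yd: "cD y = d"
  shows "y \<in> chD (P(d := Qr P d x)) A \<longleftrightarrow> y \<in> chD P A \<and> weakly_pref (P d) (Some y) (Some x)"
proof
  assume a: "y \<in> chD (P(d := Qr P d x)) A"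
  have a1: "y \<in> A" using a unfolding chD_mem by simp
  have a2: "(Some y, None) \<in> Qr P d x" using a yd unfolding chD_mem by simp
  have a3: "\<forall>z\<in>A. cD z = d \<and> z \<noteq> y \<longrightarrow> (Some y, Some z) \<in> Qr P d x" using a yd unfolding chD_mem by simp
  have "(Some y, None) \<in> P d" "weakly_pref (P d) (Some y) (Some x)" using a2 unfolding Qr_def by simp_all
  moreover have "\<forall>z\<in>A. cD z = d \<and> z \<noteq> y \<longrightarrow> (Some y, Some z) \<in> P d" using a3 unfolding Qr_def by simp
  ultimately show "y \<in> chD P A \<and> weakly_pref (P d) (Some y) (Some x)" unfolding chD_mem using a1 yd by simp
next
  assume a: "y \<in> chD P A \<and> weakly_pref (P d) (Some y) (Some x)"
  have a1: "y \<in> A" "(Some y, None) \<in> P d" "\<forall>z\<in>A. cD z = d \<and> z \<noteq> y \<longrightarrow> (Some y, Some z) \<in> P d"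
    using a yd unfolding chD_mem by simp_all
  have w: "weakly_pref (P d) (Some y) (Some x)" using a by simp
  have "(Some y, None) \<in> Qr P d x" using a1(2) w unfolding Qr_def by simp
  moreover have "\<forall>z\<in>A. cD z = d \<and> z \<noteq> y \<longrightarrow> (Some y, Some z) \<in> Qr P d x" using a1(3) w unfolding Qr_def by simp
  ultimately show "y \<in> chD (P(d := Qr P d x)) A" unfolding chD_mem using a1(1) yd by simp
qed

lemma asy_Pxr: "asy (Pxr x)" unfolding asy_def
proof (intro allI impI notI)
  fix a b assume ab: "(a, b) \<in> Pxr x" and ba: "(b, a) \<in> Pxr x"
  have "b \<noteq> Some x" using ab unfolding Pxr_def by simp
  moreover have "b = Some x" using ba unfolding Pxr_def by simp
  ultimately show False by simp
qed

lemma asy_Qr: "asy (P d) \<Longrightarrow> asy (Qr P d x)" unfolding asy_def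
proof (intro allI impI notI)
  fix a b assume as: "\<forall>a b. (a, b) \<in> P d \<longrightarrow> (b, a) \<notin> P d" and ab: "(a, b) \<in> Qr P d x" and ba: "(b, a) \<in> Qr P d x"
  have "(a, b) \<in> P d" using ab unfolding Qr_def by simp
  moreover have "(b, a) \<in> P d" using ba unfolding Qr_def by simp
  ultimately show False using as by blast
qed

lemma inj_gd: "(\<And>y. y \<in> X \<Longrightarrow> asy (Pr (cD y))) \<Longrightarrow> inj_on cD (GD Pr)"
proof (rule inj_onI)
  fix y z assume a: "\<And>y. y \<in> X \<Longrightarrow> asy (Pr (cD y))" and y: "y \<in> GD Pr" and z: "z \<in> GD Pr" and e: "cD y = cD z"
  have "y \<in> X" using y gda_X by blast
  then have as: "asy (Pr (cD y))" by (rule a)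
  have y': "y \<in> chD Pr (X - Rf Pr)" using y by (simp only: gda_eq)
  have z': "z \<in> chD Pr (X - Rf Pr)" using z by (simp only: gda_eq)
  show "y = z" by (rule chD_uniq[where P=Pr and d="cD y", OF as y' z' refl e[symmetric]])
qed

lemma SP_core:
  assumes vp: "valid_profile D X P" and XD: "\<forall>x\<in>X. cD x \<in> D" and dD: "d \<in> D"
    and Pd': "pref_on (acc_set X d) Pd'"
    and xG: "x \<in> GD (P(d := Pd'))" and xd: "cD x = d" and xacc: "(Some x, None) \<in> P d"
  shows "\<exists>m\<in>GD P. cD m = d \<and> weakly_pref (P d) (Some m) (Some x)"
proof -
  define P1 where "P1 = P(d := Pd')"
  define Px where "Px = P(d := Pxr x)"
  define Q where "Q = P(d := Qr P d x)"
  have prP: "\<And>e. e \<in> D \<Longrightarrow> pref_on (acc_set X e) (P e)" using vp unfolding valid_profile_def by blast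
  have prd: "pref_on (acc_set X d) (P d)" using prP dD .
  have asyd: "asy (P d)" by (rule pref_asy[OF prd])
  have xG1: "x \<in> GD P1" using xG unfolding P1_def .
  have xX: "x \<in> X" using xG1 gda_X by blast
  have xc1: "x \<in> chD P1 (X - Rf P1)" using xG1 by (simp only: gda_eq)
  have s1eq: "chD Px (X - Rf P1) = GD P1"
    unfolding gda_eq[of P1]
  proof (rule set_eqI)
    fix y show "y \<in> chD Px (X - Rf P1) \<longleftrightarrow> y \<in> chD P1 (X - Rf P1)"
    proof (cases "cD y = d")
      case False
      have e1: "y \<in> chD Px (X - Rf P1) \<longleftrightarrow> y \<in> chD P (X - Rf P1)" unfolding Px_def using False by (rule chD_other)
      have e2: "y \<in> chD P1 (X - Rf P1) \<longleftrightarrow> y \<in> chD P (X - Rf P1)" unfolding P1_def using False by (rule chD_other)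
      show ?thesis using e1 e2 by blast
    next
      case True
      have xA: "x \<in> X - Rf P1" using xc1 chD_sub by blast
      have e1: "y \<in> chD Px (X - Rf P1) \<longleftrightarrow> y = x" using chD_Px[OF True] xA unfolding Px_def by blast
      have e2: "y \<in> chD P1 (X - Rf P1) \<longleftrightarrow> y = x"
      proof
        assume yG: "y \<in> chD P1 (X - Rf P1)"
        have as1: "asy (P1 d)" using pref_asy[OF Pd'] unfolding P1_def by simp
        show "y = x" by (rule chD_uniq[where P=P1 and d=d, OF as1 yG xc1 True xd])
      next
        assume "y = x" then show "y \<in> chD P1 (X - Rf P1)" using xc1 by simp
      qed
      show ?thesis using e1 e2 by blast
    qed
  qed
  have R1: "Rf Px \<subseteq> Rf P1" by (rule compare[OF s1eq])
  have xPx: "x \<in> GD Px"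
  proof -
    have "x \<notin> Rf P1" using xG1 gda_disj by blast
    then have "x \<in> X - Rf Px" using xX R1 by blast
    then have "x \<in> chD Px (X - Rf Px)" using chD_Px[OF xd] unfolding Px_def by blast
    then show ?thesis by (simp only: gda_eq)
  qed
  have s2: "\<exists>w\<in>GD Q. cD w = d"
  proof (rule ccontr)
    assume nw: "\<not> (\<exists>w\<in>GD Q. cD w = d)"
    have nw': "\<And>w. w \<in> chD Q (X - Rf Q) \<Longrightarrow> cD w \<noteq> d"
    proof -
      fix w assume "w \<in> chD Q (X - Rf Q)"
      then have "w \<in> GD Q" by (simp only: gda_eq)
      then show "cD w \<noteq> d" using nw by blast
    qed
    have xRQ: "x \<in> Rf Q"
    proof (rule ccontr)
      assume "x \<notin> Rf Q"
      then have xA: "x \<in> X - Rf Q" using xX by blast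
      obtain m where m: "m \<in> chD P (X - Rf Q)" "cD m = d" "weakly_pref (P d) (Some m) (Some x)"
        using chD_exists[where P=P and d=d, OF prd _ xA xd xacc] by blast
      have "m \<in> chD Q (X - Rf Q)" using chD_Q[OF m(2)] m(1,3) unfolding Q_def by blast
      then show False using nw' m(2) by blast
    qed
    have s2eq: "chD Px (X - Rf Q) = GD Q"
      unfolding gda_eq[of Q]
    proof (rule set_eqI)
      fix y show "y \<in> chD Px (X - Rf Q) \<longleftrightarrow> y \<in> chD Q (X - Rf Q)"
      proof (cases "cD y = d")
        case False
        have e1: "y \<in> chD Px (X - Rf Q) \<longleftrightarrow> y \<in> chD P (X - Rf Q)" unfolding Px_def using False by (rule chD_other)
        have e2: "y \<in> chD Q (X - Rf Q) \<longleftrightarrow> y \<in> chD P (X - Rf Q)" unfolding Q_def using False by (rule chD_other)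
        show ?thesis using e1 e2 by blast
      next
        case True
        have "y \<notin> chD Px (X - Rf Q)" using chD_Px[OF True] xRQ unfolding Px_def by blast
        moreover have "y \<notin> chD Q (X - Rf Q)" using nw' True by blast
        ultimately show ?thesis by blast
      qed
    qed
    have R2: "Rf Px \<subseteq> Rf Q" by (rule compare[OF s2eq])
    have TTQ: "TT Px (Rf Q) = GD Q \<union> Rf Q" unfolding TT_def s2eq ..
    have TTsub: "TT Px (Rf Px) \<subseteq> GD Q \<union> Rf Q" using TT_mono[OF R2, of Px] unfolding TTQ .
    have QX: "GD Q \<union> Rf Q \<subseteq> X" using gda_X Rf_X by blast
    have "card (C (TT Px (Rf Px))) \<le> card (C (GD Q \<union> Rf Q))" by (rule C_lad[OF QX TTsub])
    then have cle: "card (GD Px) \<le> card (GD Q)" unfolding TT_final final .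
    have asyQ: "\<And>y. y \<in> X \<Longrightarrow> asy (Q (cD y))"
    proof -
      fix y assume "y \<in> X"
      then have eD: "cD y \<in> D" using XD by blast
      show "asy (Q (cD y))"
      proof (cases "cD y = d")
        case True then show ?thesis unfolding Q_def using asy_Qr[where P=P and d=d, OF asyd] by simp
      next
        case False then show ?thesis unfolding Q_def using pref_asy[OF prP[OF eD]] by simp
      qed
    qed
    have asyPx: "\<And>y. y \<in> X \<Longrightarrow> asy (Px (cD y))"
    proof -
      fix y assume "y \<in> X"
      then have eD: "cD y \<in> D" using XD by blast
      show "asy (Px (cD y))"
      proof (cases "cD y = d")
        case True then show ?thesis unfolding Px_def using asy_Pxr by simp
      next
        case False then show ?thesis unfolding Px_def using pref_asy[OF prP[OF eD]] by simp
      qed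
    qed
    have injQ: "inj_on cD (GD Q)" by (rule inj_gd[where Pr=Q, OF asyQ])
    have injPx: "inj_on cD (GD Px)" by (rule inj_gd[where Pr=Px, OF asyPx])
    have sub: "cD ` GD Q \<subseteq> cD ` GD Px"
    proof
      fix e assume "e \<in> cD ` GD Q"
      then obtain y where y: "y \<in> GD Q" "cD y = e" by blast
      have ed: "e \<noteq> d" using y nw by blast
      have yc: "y \<in> chD Q (X - Rf Q)" using y(1) by (simp only: gda_eq)
      have yA0: "y \<in> X - Rf Q" using yc chD_sub by blast
      have "(Some y, None) \<in> Q (cD y)" using yc unfolding chD_mem by blast
      then have yacc: "(Some y, None) \<in> P e" using y(2) ed unfolding Q_def by simp
      have yA: "y \<in> X - Rf Px" using yA0 R2 by blast
      have eD: "e \<in> D" using XD yA0 y(2) by blast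
      have prPx: "pref_on (acc_set X e) (Px e)" using prP[OF eD] ed unfolding Px_def by simp
      have yacc': "(Some y, None) \<in> Px e" using yacc ed unfolding Px_def by simp
      obtain m where m: "m \<in> chD Px (X - Rf Px)" "cD m = e"
        using chD_exists[where P=Px and d=e, OF prPx _ yA y(2) yacc'] by blast
      have "m \<in> GD Px" using m(1) by (simp only: gda_eq)
      then show "e \<in> cD ` GD Px" using m(2) by blast
    qed
    have "d \<in> cD ` GD Px" using xPx xd by blast
    moreover have "d \<notin> cD ` GD Q" using nw by blast
    ultimately have psub: "cD ` GD Q \<subset> cD ` GD Px" using sub by blast
    have "finite (GD Px)" using gda_X finX by (rule finite_subset)
    then have fin: "finite (cD ` GD Px)" by (rule finite_imageI)
    have "card (cD ` GD Q) < card (cD ` GD Px)" by (rule psubset_card_mono[OF fin psub])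
    then have "card (GD Q) < card (GD Px)" unfolding card_image[OF injQ] card_image[OF injPx] .
    then show False using cle by linarith
  qed
  obtain w where w: "w \<in> GD Q" "cD w = d" using s2 by blast
  have wc: "w \<in> chD Q (X - Rf Q)" using w(1) by (simp only: gda_eq)
  have wP: "w \<in> chD P (X - Rf Q)" "weakly_pref (P d) (Some w) (Some x)"
    using chD_Q[OF w(2)] wc unfolding Q_def by blast+
  have s3eq: "chD P (X - Rf Q) = GD Q"
    unfolding gda_eq[of Q]
  proof (rule set_eqI)
    fix y show "y \<in> chD P (X - Rf Q) \<longleftrightarrow> y \<in> chD Q (X - Rf Q)"
    proof (cases "cD y = d")
      case False
      have "y \<in> chD Q (X - Rf Q) \<longleftrightarrow> y \<in> chD P (X - Rf Q)" unfolding Q_def using False by (rule chD_other)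
      then show ?thesis by blast
    next
      case True
      show ?thesis
      proof
        assume yc: "y \<in> chD P (X - Rf Q)"
        have "y = w" by (rule chD_uniq[where P=P and d=d, OF asyd yc wP(1) True w(2)])
        then show "y \<in> chD Q (X - Rf Q)" using wc by simp
      next
        assume "y \<in> chD Q (X - Rf Q)"
        then show "y \<in> chD P (X - Rf Q)" using chD_Q[OF True] unfolding Q_def by blast
      qed
    qed
  qed
  have R3: "Rf P \<subseteq> Rf Q" by (rule compare[OF s3eq])
  have "w \<in> X - Rf Q" using wc chD_sub by blast
  then have wA: "w \<in> X - Rf P" using R3 by blast
  have wacc: "(Some w, None) \<in> P d" using wP(1) w(2) unfolding chD_mem by blast
  obtain m where m: "m \<in> chD P (X - Rf P)" "cD m = d" "weakly_pref (P d) (Some m) (Some w)"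
    using chD_exists[where P=P and d=d, OF prd _ wA w(2) wacc] by blast
  have "m \<in> GD P" using m(1) by (simp only: gda_eq)
  moreover have "weakly_pref (P d) (Some m) (Some x)" by (rule weakly_trans[OF prd m(3) wP(2)])
  ultimately show ?thesis using m(2) by blast
qed

lemma outcome_is:
  assumes as: "asy (Pr d)" and m: "m \<in> GD Pr" "cD m = d"
  shows "outcome (GD Pr) d = Some m"
proof -
  have mc: "m \<in> chD Pr (X - Rf Pr)" using m(1) by (simp only: gda_eq)
  have u: "\<forall>y\<in>GD Pr. cD y = d \<longrightarrow> y = m"
  proof (intro ballI impI)
    fix y assume y: "y \<in> GD Pr" "cD y = d"
    have yc: "y \<in> chD Pr (X - Rf Pr)" using y(1) by (simp only: gda_eq)
    show "y = m" by (rule chD_uniq[where P=Pr and d=d, OF as yc mc y(2) m(2)])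
  qed
  show ?thesis by (rule outcome_some[OF m u])
qed

lemma gd_acc: "m \<in> GD Pr \<Longrightarrow> (Some m, None) \<in> Pr (cD m)"
proof -
  assume "m \<in> GD Pr"
  then have "m \<in> chD Pr (X - Rf Pr)" by (simp only: gda_eq)
  then show ?thesis unfolding chD_mem by simp
qed

lemma outc:
  assumes as: "asy (Pr d)"
  shows "(outcome (GD Pr) d = None \<and> (\<forall>y\<in>GD Pr. cD y \<noteq> d)) \<or>
         (\<exists>m\<in>GD Pr. cD m = d \<and> outcome (GD Pr) d = Some m \<and> (Some m, None) \<in> Pr d)"
proof (cases "\<exists>m\<in>GD Pr. cD m = d")
  case False
  then have n: "\<forall>y\<in>GD Pr. cD y \<noteq> d" by blast
  then have "outcome (GD Pr) d = None" by (rule outcome_none)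
  then show ?thesis using n by simp
next
  case True
  then obtain m where m: "m \<in> GD Pr" "cD m = d" by blast
  have o: "outcome (GD Pr) d = Some m" by (rule outcome_is[OF as m])
  have a: "(Some m, None) \<in> Pr d" using gd_acc[OF m(1)] m(2) by simp
  have "\<exists>m\<in>GD Pr. cD m = d \<and> outcome (GD Pr) d = Some m \<and> (Some m, None) \<in> Pr d"
    using m o a by blast
  then show ?thesis by (rule disjI2)
qed

lemma SP: assumes XD: "\<forall>x\<in>X. cD x \<in> D" shows "strategy_proof D X (gda H X B tb)"
  unfolding strategy_proof_def
proof (intro allI impI, elim conjE)
  fix P d P' assume vp: "valid_profile D X P" and dD: "d \<in> D" and pr': "pref_on (acc_set X d) P'"
  define P1 where "P1 = P(d := P')"
  have prd: "pref_on (acc_set X d) (P d)" using vp dD unfolding valid_profile_def by blast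
  have as: "asy (P d)" by (rule pref_asy[OF prd])
  have as1: "asy (P1 d)" using pref_asy[OF pr'] unfolding P1_def by simp
  have o: "(outcome (GD P) d = None \<and> (\<forall>y\<in>GD P. cD y \<noteq> d)) \<or>
         (\<exists>m\<in>GD P. cD m = d \<and> outcome (GD P) d = Some m \<and> (Some m, None) \<in> P d)"
    by (rule outc[where Pr=P and d=d, OF as])
  have o1: "(outcome (GD P1) d = None \<and> (\<forall>y\<in>GD P1. cD y \<noteq> d)) \<or>
         (\<exists>m\<in>GD P1. cD m = d \<and> outcome (GD P1) d = Some m \<and> (Some m, None) \<in> P1 d)"
    by (rule outc[where Pr=P1 and d=d, OF as1])
  have geNone: "weakly_pref (P d) (outcome (GD P) d) None"
  proof (cases "\<exists>m\<in>GD P. cD m = d")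
    case True
    then obtain m where m: "m \<in> GD P" "cD m = d" by blast
    have "outcome (GD P) d = Some m" by (rule outcome_is[OF as m])
    moreover have "(Some m, None) \<in> P d" using gd_acc[OF m(1)] m(2) by simp
    ultimately show ?thesis unfolding weakly_pref_def by simp
  next
    case False
    then have n: "\<forall>y\<in>GD P. cD y \<noteq> d" by blast
    have "outcome (GD P) d = None" by (rule outcome_none[OF n])
    then show ?thesis unfolding weakly_pref_def by simp
  qed
  have main: "weakly_pref (P d) (outcome (GD P) d) (outcome (GD P1) d)"
  proof (cases "outcome (GD P1) d = None")
    case True then show ?thesis using geNone by simp
  next
    case False
    have "\<exists>m\<in>GD P1. cD m = d \<and> outcome (GD P1) d = Some m \<and> (Some m, None) \<in> P1 d"
      using o1
    proof (rule disjE)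
      assume "outcome (GD P1) d = None \<and> (\<forall>y\<in>GD P1. cD y \<noteq> d)"
      then show ?thesis using False by simp
    qed
    then obtain x where x: "x \<in> GD P1" "cD x = d" "outcome (GD P1) d = Some x" by blast
    have xX: "x \<in> X" using x(1) gda_X by blast
    show ?thesis
    proof (cases "(Some x, None) \<in> P d")
      case True
      have xG: "x \<in> GD (P(d := P'))" using x(1) unfolding P1_def .
      obtain m where m: "m \<in> GD P" "cD m = d" "weakly_pref (P d) (Some m) (Some x)"
        using SP_core[OF vp XD dD pr' xG x(2) True] by blast
      have "outcome (GD P) d = Some m" by (rule outcome_is[OF as m(1,2)])
      then show ?thesis using m(3) x(3) by simp
    next
      case False
      have "(Some x, None) \<in> P d \<or> (None, Some x) \<in> P d"
        using pref_total[OF prd acc_Some[OF xX x(2)] acc_None] by simp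
      then have nx: "(None, Some x) \<in> P d" using False by simp
      have "weakly_pref (P d) None (Some x)" using nx unfolding weakly_pref_def by simp
      then have "weakly_pref (P d) (outcome (GD P) d) (Some x)" by (rule weakly_trans[OF prd geNone])
      then show ?thesis using x(3) by simp
    qed
  qed
  then show "weakly_pref (P d) (outcome (GD P) d) (outcome (GD (P(d := P'))) d)" unfolding P1_def .
qed

lemma stab:
  assumes vp: "valid_profile D X P" and XD: "\<forall>x\<in>X. cD x \<in> D"
    and fh: "\<forall>h\<in>H. 0 < \<gamma> h \<and> (\<forall>Y \<subseteq> hosp_part X h. f h Y = \<gamma> h * wsum Y)"
  shows "\<exists>B'. (\<forall>h\<in>H. B h \<le> B' h \<and> B' h < B h + wbar X h) \<and> stable H X P f B' (GD P)"
proof -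
  let ?Y = "GD P"
  define B' where "B' h = max (B h) (wsum (hosp_part ?Y h))" for h
  have prP: "\<And>e. e \<in> D \<Longrightarrow> pref_on (acc_set X e) (P e)" using vp unfolding valid_profile_def by blast
  have YX: "?Y \<subseteq> X" by (rule gda_X)
  have Yh: "\<And>h. h \<in> H \<Longrightarrow> hosp_part ?Y h = chh B tb h (hosp_part ?Y h)"
  proof -
    fix h assume h: "h \<in> H"
    have "hosp_part (C ?Y) h = chh B tb h (hosp_part ?Y h)" by (rule C_hosp[OF h YX])
    then show "hosp_part ?Y h = chh B tb h (hosp_part ?Y h)" unfolding gda_fix .
  qed
  have bounds: "\<forall>h\<in>H. B h \<le> B' h \<and> B' h < B h + wbar X h"
  proof
    fix h assume h: "h \<in> H"
    have "wsum (chh B tb h (hosp_part ?Y h)) < B h + wbar X h"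
      by (rule conjunct2[OF conjunct2[OF chh_facts[OF h hpS[OF YX]]]])
    then have "wsum (hosp_part ?Y h) < B h + wbar X h" using Yh[OF h] by simp
    moreover have "B h < B h + wbar X h" using wbar_pos[OF h] by simp
    ultimately show "B h \<le> B' h \<and> B' h < B h + wbar X h" unfolding B'_def by simp
  qed
  have matching: "is_matching ?Y"
    unfolding is_matching_def
  proof
    fix e
    have fin: "finite (doc_part ?Y e)"
    proof -
      have "doc_part ?Y e \<subseteq> X" using YX unfolding doc_part_def by blast
      then show ?thesis using finX by (rule finite_subset)
    qed
    have "\<forall>a1\<in>doc_part ?Y e. \<forall>a2\<in>doc_part ?Y e. a1 = a2"
    proof (intro ballI)
      fix a1 a2 assume a1: "a1 \<in> doc_part ?Y e" and a2: "a2 \<in> doc_part ?Y e"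
      have a1': "a1 \<in> ?Y" "cD a1 = e" using a1 unfolding doc_part_def by simp_all
      have a2': "a2 \<in> ?Y" "cD a2 = e" using a2 unfolding doc_part_def by simp_all
      have "a1 \<in> X" using a1'(1) YX by blast
      then have "e \<in> D" using XD a1'(2) by blast
      then have as: "asy (P e)" by (rule pref_asy[OF prP])
      have c1: "a1 \<in> chD P (X - Rf P)" using a1'(1) by (simp only: gda_eq)
      have c2: "a2 \<in> chD P (X - Rf P)" using a2'(1) by (simp only: gda_eq)
      show "a1 = a2" by (rule chD_uniq[where P=P and d=e, OF as c1 c2 a1'(2) a2'(2)])
    qed
    then have "card (doc_part ?Y e) \<le> Suc 0" using card_le_Suc0_iff_eq[OF fin] by simp
    then show "finite (doc_part ?Y e) \<and> card (doc_part ?Y e) \<le> 1" using fin by simp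
  qed
  have feas: "feasible H B' ?Y" unfolding feasible_def B'_def by simp
  have noblock: "\<not> (\<exists>h\<in>H. \<exists>Z. blocks X P f B' h Z ?Y)"
  proof
    assume "\<exists>h\<in>H. \<exists>Z. blocks X P f B' h Z ?Y"
    then obtain h Z where h: "h \<in> H" and bl: "blocks X P f B' h Z ?Y" by blast
    have bl': "Z \<subseteq> hp h \<and> is_matching Z \<and> (\<forall>x\<in>Z - ?Y. (Some x, outcome ?Y (cD x)) \<in> P (cD x))
       \<and> f h Z > f h (hosp_part ?Y h) \<and> wsum Z \<le> B' h" using bl unfolding blocks_def .
    have Zh: "Z \<subseteq> hp h" using bl' by blast
    have Zd: "\<forall>x\<in>Z - ?Y. (Some x, outcome ?Y (cD x)) \<in> P (cD x)" using bl' by blast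
    have fz: "f h Z > f h (hosp_part ?Y h)" using bl' by blast
    have wz: "wsum Z \<le> B' h" using bl' by blast
    have Yh': "hosp_part ?Y h \<subseteq> hp h" by (rule hpS[OF YX])
    have fh': "0 < \<gamma> h \<and> (\<forall>Y \<subseteq> hosp_part X h. f h Y = \<gamma> h * wsum Y)" using fh h by blast
    have gp: "0 < \<gamma> h" using fh' by simp
    have fZ: "f h Z = \<gamma> h * wsum Z" using fh' Zh by simp
    have fY: "f h (hosp_part ?Y h) = \<gamma> h * wsum (hosp_part ?Y h)" using fh' Yh' by simp
    have gt: "wsum (hosp_part ?Y h) < wsum Z"
    proof -
      have "\<gamma> h * wsum (hosp_part ?Y h) < \<gamma> h * wsum Z" using fz fZ fY by simp
      then show ?thesis using gp by (simp add: mult_less_cancel_left_pos)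
    qed
    show False
    proof (cases "B h \<le> wsum (hosp_part ?Y h)")
      case True
      then have "B' h = wsum (hosp_part ?Y h)" unfolding B'_def by simp
      then show False using gt wz by simp
    next
      case False
      then have lt: "wsum (hosp_part ?Y h) < B h" by simp
      have notsub: "\<not> Z \<subseteq> ?Y"
      proof
        assume "Z \<subseteq> ?Y"
        then have ZY: "Z \<subseteq> hosp_part ?Y h" using Zh unfolding hosp_part_def by blast
        have fin: "finite (hosp_part ?Y h)" using Yh' fin_hp by (rule finite_subset)
        have pos: "\<forall>z\<in>hosp_part ?Y h. 0 < cW z"
        proof
          fix z assume "z \<in> hosp_part ?Y h"
          then have "z \<in> X" using Yh' hp_sub by blast
          then show "0 < cW z" using wpos by blast
        qed
        have "wsum Z \<le> wsum (hosp_part ?Y h)" by (rule wsum_mono[OF ZY fin pos])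
        then show False using gt by simp
      qed
      then obtain x where x: "x \<in> Z" "x \<notin> ?Y" by blast
      have xX: "x \<in> X" using x(1) Zh hp_sub by blast
      have xh: "cH x = h" using x(1) Zh unfolding hosp_part_def by blast
      define e where "e = cD x"
      have eD: "e \<in> D" using XD xX e_def by blast
      have pre: "pref_on (acc_set X e) (P e)" by (rule prP[OF eD])
      have as: "asy (P e)" by (rule pref_asy[OF pre])
      have xpref: "(Some x, outcome ?Y e) \<in> P e" using Zd x unfolding e_def by blast
      have xR: "x \<in> Rf P"
      proof (rule ccontr)
        assume "x \<notin> Rf P"
        then have xA: "x \<in> X - Rf P" using xX by blast
        show False
        proof (cases "\<exists>m\<in>?Y. cD m = e")
          case False
          then have n: "\<forall>y\<in>?Y. cD y \<noteq> e" by blast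
          have "outcome ?Y e = None" by (rule outcome_none[OF n])
          then have acc: "(Some x, None) \<in> P e" using xpref by simp
          obtain m where m: "m \<in> chD P (X - Rf P)" "cD m = e"
            using chD_exists[where P=P and d=e, OF pre _ xA e_def[symmetric] acc] by blast
          have "m \<in> ?Y" using m(1) by (simp only: gda_eq)
          then show False using n m(2) by blast
        next
          case True
          then obtain m where m: "m \<in> ?Y" "cD m = e" by blast
          have om: "outcome ?Y e = Some m" by (rule outcome_is[OF as m])
          have mc: "m \<in> chD P (X - Rf P)" using m(1) by (simp only: gda_eq)
          have xm: "x \<noteq> m" using x(2) m(1) by blast
          have all: "\<forall>z\<in>X - Rf P. cD z = cD m \<and> z \<noteq> m \<longrightarrow> (Some m, Some z) \<in> P (cD m)"
            using mc unfolding chD_mem by blast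
          have "cD x = cD m" using m(2) e_def by simp
          then have "(Some m, Some x) \<in> P (cD m)" using all xA xm by blast
          then have c1: "(Some m, Some x) \<in> P e" using m(2) by simp
          have c2: "(Some x, Some m) \<in> P e" using xpref om by simp
          show False using as c1 c2 unfolding asy_def by blast
        qed
      qed
      have TX: "?Y \<union> Rf P \<subseteq> X" using YX Rf_X by blast
      have "hosp_part (C (?Y \<union> Rf P)) h = chh B tb h (hosp_part (?Y \<union> Rf P) h)" by (rule C_hosp[OF h TX])
      then have eqh: "hosp_part ?Y h = chh B tb h (hosp_part (?Y \<union> Rf P) h)" unfolding final .
      have "x \<in> hosp_part (?Y \<union> Rf P) h" using xR xh unfolding hosp_part_def by simp
      moreover have "x \<notin> hosp_part ?Y h" using x(2) unfolding hosp_part_def by simp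
      ultimately have ne: "chh B tb h (hosp_part (?Y \<union> Rf P) h) \<noteq> hosp_part (?Y \<union> Rf P) h" using eqh by blast
      have "B h \<le> wsum (chh B tb h (hosp_part (?Y \<union> Rf P) h))"
        using conjunct1[OF conjunct2[OF chh_facts[OF h hpS[OF TX]]]] ne by blast
      then show False using eqh lt by simp
    qed
  qed
  have "stable H X P f B' ?Y" unfolding stable_def using YX matching feas noblock by blast
  then show ?thesis using bounds by blast
qed

end

theorem theorem6:
  fixes D :: "'d set" and H :: "'h set" and X :: "('d, 'h) contract set"
    and B :: "'h \<Rightarrow> real" and f :: "'h \<Rightarrow> ('d, 'h) contract set \<Rightarrow> real"
    and \<gamma> :: "'h \<Rightarrow> real" and tb :: "'h \<Rightarrow> ('d, 'h) contract rel"
  assumes "finite D" and "finite H" and "finite X"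
    and "X \<subseteq> D \<times> H \<times> {w. 0 < w}"
    and "\<forall>h\<in>H. 0 < B h"
    and "\<forall>x\<in>X. cW x \<le> B (cH x)"
    and "\<forall>h\<in>H. hosp_part X h \<noteq> {}"
    and "\<forall>h\<in>H. 0 < \<gamma> h \<and> (\<forall>Y \<subseteq> hosp_part X h. f h Y = \<gamma> h * wsum Y)"
    and "\<forall>h\<in>H. strict_linear_order_on (hosp_part X h) (tb h)"
  shows "strategy_proof D X (gda H X B tb) \<and>
    (\<forall>P. valid_profile D X P \<longrightarrow>
      (\<exists>B'. (\<forall>h\<in>H. B h \<le> B' h \<and> B' h < B h + wbar X h) \<and>
            stable H X P f B' (gda H X B tb P)))"
proof -
  have mem: "\<And>x. x \<in> X \<Longrightarrow> cD x \<in> D \<and> cH x \<in> H \<and> 0 < cW x"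
  proof -
    fix x assume x: "x \<in> X"
    have "x \<in> D \<times> H \<times> {w. 0 < w}" by (rule subsetD[OF assms(4) x])
    then have "fst x \<in> D" "fst (snd x) \<in> H" "snd (snd x) \<in> {w. 0 < w}" by (simp_all only: mem_Times_iff)
    then show "cD x \<in> D \<and> cH x \<in> H \<and> 0 < cW x" unfolding cD_def cH_def cW_def by simp
  qed
  have XD: "\<forall>x\<in>X. cD x \<in> D" using mem by blast
  interpret m: mkt H X B tb
  proof
    show "finite X" by (fact assms(3))
    show "\<forall>x\<in>X. cH x \<in> H" using mem by blast
    show "\<forall>x\<in>X. 0 < cW x" using mem by blast
    show "\<forall>h\<in>H. 0 < B h" by (fact assms(5))
    show "\<forall>h\<in>H. strict_linear_order_on (hosp_part X h) (tb h)" by (fact assms(9))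
    show "\<forall>h\<in>H. hosp_part X h \<noteq> {}" by (fact assms(7))
    show "finite H" by (fact assms(2))
  qed
  have sp: "strategy_proof D X (gda H X B tb)" by (rule m.SP[OF XD])
  have st: "\<forall>P. valid_profile D X P \<longrightarrow>
      (\<exists>B'. (\<forall>h\<in>H. B h \<le> B' h \<and> B' h < B h + wbar X h) \<and> stable H X P f B' (gda H X B tb P))"
  proof (intro allI impI)
    fix P assume vp: "valid_profile D X P"
    show "\<exists>B'. (\<forall>h\<in>H. B h \<le> B' h \<and> B' h < B h + wbar X h) \<and> stable H X P f B' (gda H X B tb P)"
      by (rule m.stab[OF vp XD assms(8)])
  qed
  show ?thesis using sp st by blast
qed

end
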